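(* Let $\alpha\ge1$, let $n,m,k$ be integers with $2\le m\le k<n$, and let $\mathcal{A}$ be any single-pass streaming algorithm with memory $m$. Then for all sufficiently large $T$, there is an instance $\nu\in\mathcal{I}\cup\mathcal{I}'$ (defined in the context, with $\varepsilon=\frac14(k/T)^{\frac{1}{2+2\alpha}}$) on which $$\mathbb{E}_\nu[R(T)] > \frac{2}{16^{\alpha+1}}\cdot\frac{(k-m+1)\,T^{\frac{1}{\alpha+1}}}{k^{1+\frac{1}{\alpha+1}}}\sum_{i:\Delta_i(\nu)>0}\Delta_i(\nu)^{1-2\alpha}.$$ In particular the expected regret of $\mathcal{A}$ on some instance of this family is $\Omega\!\left(16^{-\alpha}\frac{(k-m+1)T^{\frac{1}{\alpha+1}}}{k^{1+\frac{1}{\alpha+1}}}\sum_{i:\Delta_i>0}\Delta_i^{1-2\alpha}\right)$.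
   Context: Streaming stochastic multi-armed bandit: $n$ arms arrive one by one in a stream; arm $i$ has Bernoulli rewards with mean $\mu_i$. At most $m$ arms can be stored in memory; in each of $T$ rounds the player may discard stored arms and read next arms from the stream, then pulls exactly one stored arm $A_t$; discarded or passed-over arms cannot be pulled again. $\Delta_i=\mu_*-\mu_i$ where $\mu_*=\max_j\mu_j$, and $\mathbb{E}_\nu[R(T)]=\mathbb{E}_\nu[\sum_{t=1}^T(\mu_*-\mu_{A_t})]$ when the algorithm runs on instance $\nu$. Hard instances: let $\varepsilon=\frac14\left(\frac{k}{T}\right)^{\frac{1}{2+2\alpha}}$, arms arriving in the stream in order $1,2,\dots,n$. $\nu_1$ has arm 1 with mean $\frac12+n\varepsilon$, arms $2,\dots,k$ with mean $\frac12+(n-1)\varepsilon$, and arms $k+1,\dots,n$ with mean $\frac12$. For $2\le i\le k$, $\nu_i$ equals $\nu_1$ except that arm $i$ has mean $\frac12+(n+1)\varepsilon$. $\mathcal{I}=\{\nu_1,\dots,\nu_k\}$. For each $i\in[k]$, $\nu_i'$ equals $\nu_i$ except that arms $k+1,\dots,n$ have mean $1$; $\mathcal{I}'=\{\nu_1',\dots,\nu_k'\}$. *)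

theory Defs
  imports "HOL-Probability.Probability"
begin

text \<open>Arms are numbered 1..n and arrive in the stream in this order.
  A memory configuration is (M, p): M is the set of stored arms, p the index
  of the next arm to be read from the stream (initially ({}, 1)).\<close>

type_synonym config = "nat set \<times> nat"

text \<open>History: for each past round, the configuration after the discard/read
  phase, the pulled arm, and the observed (Bernoulli) reward.\<close>
type_synonym history = "(config \<times> nat \<times> bool) list"

text \<open>A (possibly randomized) algorithm: given the history, a distribution over
  (new configuration, arm to pull).\<close>
type_synonym policy = "history \<Rightarrow> (config \<times> nat) pmf"

inductive mem_step :: "nat \<Rightarrow> nat \<Rightarrow> config \<Rightarrow> config \<Rightarrow> bool" for n m where
  refl: "mem_step n m s s"
| discard: "mem_step n m s (M, p) \<Longrightarrow> x \<in> M \<Longrightarrow> mem_step n m s (M - {x}, p)"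
| read: "mem_step n m s (M, p) \<Longrightarrow> p \<le> n \<Longrightarrow> card M < m \<Longrightarrow> mem_step n m s (insert p M, Suc p)"

definition init_config :: config where "init_config = ({}, 1)"

definition cur_config :: "history \<Rightarrow> config" where
  "cur_config h = (if h = [] then init_config else fst (last h))"

definition legal_move :: "nat \<Rightarrow> nat \<Rightarrow> history \<Rightarrow> config \<Rightarrow> nat \<Rightarrow> bool" where
  "legal_move n m h c a \<longleftrightarrow> mem_step n m (cur_config h) c \<and> a \<in> fst c"

definition hist_ok :: "nat \<Rightarrow> nat \<Rightarrow> history \<Rightarrow> bool" where
  "hist_ok n m h \<longleftrightarrow> (\<forall>i<length h. legal_move n m (take i h) (fst (h ! i)) (fst (snd (h ! i))))"

text \<open>A single-pass streaming algorithm with memory m (on a stream of n arms).\<close>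
definition valid_policy :: "nat \<Rightarrow> nat \<Rightarrow> policy \<Rightarrow> bool" where
  "valid_policy n m \<pi> \<longleftrightarrow>
     (\<forall>h. hist_ok n m h \<longrightarrow> (\<forall>x \<in> set_pmf (\<pi> h). legal_move n m h (fst x) (snd x)))"

fun traj :: "policy \<Rightarrow> (nat \<Rightarrow> real) \<Rightarrow> nat \<Rightarrow> history pmf" where
  "traj \<pi> \<mu> 0 = return_pmf []"
| "traj \<pi> \<mu> (Suc t) =
     bind_pmf (traj \<pi> \<mu> t) (\<lambda>h. bind_pmf (\<pi> h) (\<lambda>(c, a).
       map_pmf (\<lambda>r. h @ [(c, a, r)]) (bernoulli_pmf (\<mu> a))))"

definition mu_star :: "nat \<Rightarrow> (nat \<Rightarrow> real) \<Rightarrow> real" where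
  "mu_star n \<mu> = Max (\<mu> ` {1..n})"

definition gap :: "nat \<Rightarrow> (nat \<Rightarrow> real) \<Rightarrow> nat \<Rightarrow> real" where
  "gap n \<mu> i = mu_star n \<mu> - \<mu> i"

definition regret_of :: "nat \<Rightarrow> (nat \<Rightarrow> real) \<Rightarrow> history \<Rightarrow> real" where
  "regret_of n \<mu> h = (\<Sum>x\<leftarrow>h. gap n \<mu> (fst (snd x)))"

definition expected_regret :: "nat \<Rightarrow> policy \<Rightarrow> (nat \<Rightarrow> real) \<Rightarrow> nat \<Rightarrow> real" where
  "expected_regret n \<pi> \<mu> T = measure_pmf.expectation (traj \<pi> \<mu> T) (regret_of n \<mu>)"

definition eps :: "real \<Rightarrow> nat \<Rightarrow> nat \<Rightarrow> real" where
  "eps \<alpha> k T = 1/4 * (real k / real T) powr (1 / (2 + 2 * \<alpha>))"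

definition nu :: "nat \<Rightarrow> nat \<Rightarrow> real \<Rightarrow> nat \<Rightarrow> nat \<Rightarrow> real" where
  "nu n k \<epsilon> i j =
     (if 2 \<le> i \<and> j = i then 1/2 + (real n + 1) * \<epsilon>
      else if j = 1 then 1/2 + real n * \<epsilon>
      else if j \<le> k then 1/2 + (real n - 1) * \<epsilon>
      else 1/2)"

definition nu' :: "nat \<Rightarrow> nat \<Rightarrow> real \<Rightarrow> nat \<Rightarrow> nat \<Rightarrow> real" where
  "nu' n k \<epsilon> i j = (if k < j then 1 else nu n k \<epsilon> i j)"

definition hard_instances :: "nat \<Rightarrow> nat \<Rightarrow> real \<Rightarrow> (nat \<Rightarrow> real) set" where
  "hard_instances n k \<epsilon> = (\<lambda>i. nu n k \<epsilon> i) ` {1..k} \<union> (\<lambda>i. nu' n k \<epsilon> i) ` {1..k}"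

end

theory Submission
  imports Defs
begin

definition cinv :: "nat \<Rightarrow> nat \<Rightarrow> config \<Rightarrow> bool" where
  "cinv n m c \<longleftrightarrow> finite (fst c) \<and> card (fst c) \<le> m \<and> fst c \<subseteq> {1..<snd c} \<and> 1 \<le> snd c \<and> snd c \<le> Suc n"

lemma mem_step_inv: "mem_step n m s s' \<Longrightarrow> cinv n m s \<Longrightarrow> cinv n m s'"
proof (induction rule: mem_step.induct)
  case refl then show ?case .
next
  case (discard s M p x) then show ?case
    by (auto simp: cinv_def intro: order.trans[OF card_Diff1_le])
next
  case (read s M p) then show ?case by (auto simp: cinv_def card_insert_if)
qed

lemma mem_step_gone: "mem_step n m s s' \<Longrightarrow> j \<notin> fst s \<Longrightarrow> j < snd s \<Longrightarrow> j \<notin> fst s' \<and> j < snd s'"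
  by (induction rule: mem_step.induct) auto

lemma cinv_init: "cinv n m init_config"
  by (simp add: cinv_def init_config_def)

abbreviation arm :: "config \<times> nat \<times> bool \<Rightarrow> nat" where "arm x \<equiv> fst (snd x)"
abbreviation rew :: "config \<times> nat \<times> bool \<Rightarrow> bool" where "rew x \<equiv> snd (snd x)"

lemma cur_config_take:
  assumes "0 < s" "s \<le> length h" shows "cur_config (take s h) = fst (h ! (s - 1))"
proof -
  have "take s h \<noteq> []" using assms by auto
  moreover have "last (take s h) = h ! (s - 1)"
    using assms by (subst last_conv_nth) (auto simp: min_def)
  ultimately show ?thesis by (simp add: cur_config_def)
qed

lemma hist_ok_step:
  assumes "hist_ok n m h" "s < length h"
  shows "mem_step n m (if s = 0 then init_config else fst (h ! (s - 1))) (fst (h ! s)) \<and> arm (h ! s) \<in> fst (fst (h ! s))"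
proof -
  have "legal_move n m (take s h) (fst (h ! s)) (arm (h ! s))" using assms by (auto simp: hist_ok_def)
  moreover have "cur_config (take s h) = (if s = 0 then init_config else fst (h ! (s - 1)))"
    using cur_config_take[of s h] assms by (auto simp: cur_config_def)
  ultimately show ?thesis by (simp add: legal_move_def)
qed

lemma hist_cinv: "hist_ok n m h \<Longrightarrow> s < length h \<Longrightarrow> cinv n m (fst (h ! s))"
proof (induction s)
  case 0 then show ?case using hist_ok_step[OF 0(1), of 0] cinv_init mem_step_inv by fastforce
next
  case (Suc s) then show ?case using hist_ok_step[OF Suc(2), of "Suc s"]
      mem_step_inv[of n m "fst (h ! s)" "fst (h ! Suc s)"] by auto
qed

lemma cur_config_cinv: "hist_ok n m h \<Longrightarrow> cinv n m (cur_config h)"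
  using hist_cinv[of n m h "length h - 1"] cinv_init
  by (cases "h = []") (auto simp: cur_config_def last_conv_nth)

lemma hist_gone:
  assumes "hist_ok n m h" "s \<le> s'" "s' < length h" "j \<notin> fst (fst (h ! s))" "j < snd (fst (h ! s))"
  shows "j \<notin> fst (fst (h ! s')) \<and> j < snd (fst (h ! s'))"
  using assms(2,3)
proof (induction s' rule: dec_induct)
  case base then show ?case using assms by auto
next
  case (step s')
  then show ?case using hist_ok_step[OF assms(1), of "Suc s'"]
      mem_step_gone[of n m "fst (h ! s')" "fst (h ! Suc s')" j] by auto
qed

lemma hist_gone_arm:
  assumes "hist_ok n m h" "s \<le> s'" "s' < length h" "j \<notin> fst (fst (h ! s))" "j < snd (fst (h ! s))"
  shows "arm (h ! s') \<noteq> j"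
  using hist_gone[OF assms] hist_ok_step[OF assms(1) assms(3)] by auto

lemma traj_support:
  assumes "valid_policy n m \<pi>" "h \<in> set_pmf (traj \<pi> \<mu> t)"
  shows "length h = t \<and> hist_ok n m h"
  using assms(2)
proof (induction t arbitrary: h)
  case 0 then show ?case by (simp add: hist_ok_def)
next
  case (Suc t)
  then obtain h0 c a r where h: "h = h0 @ [(c, a, r)]" and h0: "h0 \<in> set_pmf (traj \<pi> \<mu> t)"
    and ca: "(c, a) \<in> set_pmf (\<pi> h0)"
    by (auto split: prod.splits)
  from Suc.IH[OF h0] have ih: "length h0 = t" "hist_ok n m h0" by auto
  have lm: "legal_move n m h0 c a" using assms(1) ih(2) ca unfolding valid_policy_def by fastforce
  have "hist_ok n m h"
    unfolding hist_ok_def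
  proof (intro allI impI)
    fix i assume "i < length h"
    then consider "i < length h0" | "i = length h0" using h by fastforce
    then show "legal_move n m (take i h) (fst (h ! i)) (fst (snd (h ! i)))"
    proof cases
      case 1 then show ?thesis using ih(2) h by (auto simp: hist_ok_def nth_append)
    next
      case 2 then show ?thesis using lm h by simp
    qed
  qed
  then show ?case using h ih by simp
qed

definition Xset :: "nat \<Rightarrow> (config \<times> nat \<times> bool) set" where
  "Xset n = (Pow {1..n} \<times> {0..Suc n}) \<times> {1..n} \<times> UNIV"

lemma finite_Xset: "finite (Xset n)" by (simp add: Xset_def)

lemma cinv_sub: "cinv n m c \<Longrightarrow> fst c \<subseteq> {1..n}"
  by (auto simp: cinv_def)

lemma hist_in_X: "hist_ok n m h \<Longrightarrow> set h \<subseteq> Xset n"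
proof
  fix x assume ok: "hist_ok n m h" and "x \<in> set h"
  then obtain s where s: "s < length h" "x = h ! s" by (auto simp: in_set_conv_nth)
  have "cinv n m (fst x)" using hist_cinv[OF ok s(1)] s by simp
  moreover have "arm x \<in> fst (fst x)" using hist_ok_step[OF ok s(1)] s by simp
  ultimately show "x \<in> Xset n"
    by (cases x) (auto simp: Xset_def cinv_def)
qed

lemma finite_traj:
  assumes "valid_policy n m \<pi>" shows "finite (set_pmf (traj \<pi> \<mu> t))"
proof -
  have "set_pmf (traj \<pi> \<mu> t) \<subseteq> {h. set h \<subseteq> Xset n \<and> length h = t}"
    using traj_support[OF assms] hist_in_X by blast
  moreover have "finite {h. set h \<subseteq> Xset n \<and> length h = t}"
    by (rule finite_lists_length_eq[OF finite_Xset])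
  ultimately show ?thesis by (rule finite_subset)
qed

lemma finite_policy:
  assumes "valid_policy n m \<pi>" "hist_ok n m h" shows "finite (set_pmf (\<pi> h))"
proof -
  have "set_pmf (\<pi> h) \<subseteq> (Pow {1..n} \<times> {0..Suc n}) \<times> {1..n}"
  proof
    fix x assume "x \<in> set_pmf (\<pi> h)"
    then have "legal_move n m h (fst x) (snd x)" using assms by (auto simp: valid_policy_def)
    then have "cinv n m (fst x)" "snd x \<in> fst (fst x)"
      using mem_step_inv[of n m "cur_config h" "fst x"] cur_config_cinv[OF assms(2)]
      by (auto simp: legal_move_def)
    then show "x \<in> (Pow {1..n} \<times> {0..Suc n}) \<times> {1..n}"
      by (cases x) (auto simp: cinv_def)
  qed
  then show ?thesis by (rule finite_subset) simp
qed

lemma expectation_bind_finite: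
  fixes h :: "'b \<Rightarrow> real"
  assumes "finite (set_pmf p)" "\<And>x. x \<in> set_pmf p \<Longrightarrow> finite (set_pmf (f x))"
  shows "measure_pmf.expectation (bind_pmf p f) h = measure_pmf.expectation p (\<lambda>x. measure_pmf.expectation (f x) h)"
  using assms
  by (subst pmf_expectation_bind[of "set_pmf p"]) (auto simp: integral_measure_pmf[of "set_pmf p"])

lemma exp_step:
  fixes f :: "history \<Rightarrow> real"
  assumes vp: "valid_policy n m \<pi>" and mu: "\<And>a. 0 \<le> \<mu> a \<and> \<mu> a \<le> 1"
  shows "measure_pmf.expectation (traj \<pi> \<mu> (Suc t)) f =
    measure_pmf.expectation (traj \<pi> \<mu> t) (\<lambda>h. measure_pmf.expectation (\<pi> h)
      (\<lambda>ca. \<mu> (snd ca) * f (h @ [(fst ca, snd ca, True)]) + (1 - \<mu> (snd ca)) * f (h @ [(fst ca, snd ca, False)])))"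
proof -
  have fin1: "finite (set_pmf (traj \<pi> \<mu> t))" by (rule finite_traj[OF vp])
  have fin2: "finite (set_pmf (\<pi> h))" if "h \<in> set_pmf (traj \<pi> \<mu> t)" for h
    using finite_policy[OF vp] traj_support[OF vp that] by blast
  have finb: "finite (set_pmf (bernoulli_pmf p))" for p
    by (rule finite_subset[of _ UNIV]) auto
  show ?thesis
    apply (simp only: traj.simps)
    apply (subst expectation_bind_finite[OF fin1])
     apply (use fin2 finb in \<open>auto split: prod.splits\<close>)[1]
    apply (rule integral_cong_AE)
      apply simp apply simp
    apply (unfold AE_measure_pmf_iff)
    apply (intro ballI)
    apply (subst expectation_bind_finite[OF fin2])
      apply assumption
     apply (use finb in \<open>auto split: prod.splits\<close>)[1]
    apply (rule integral_cong_AE)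
      apply simp apply simp
    apply (unfold AE_measure_pmf_iff)
    apply (intro ballI)
    using mu by (auto split: prod.splits simp: algebra_simps)
qed

definition lrw :: "(nat \<Rightarrow> real) \<Rightarrow> (nat \<Rightarrow> real) \<Rightarrow> config \<times> nat \<times> bool \<Rightarrow> real" where
  "lrw \<mu> \<mu>' x = (if rew x then \<mu>' (arm x) / \<mu> (arm x) else (1 - \<mu>' (arm x)) / (1 - \<mu> (arm x)))"

definition lr :: "(nat \<Rightarrow> real) \<Rightarrow> (nat \<Rightarrow> real) \<Rightarrow> history \<Rightarrow> real" where
  "lr \<mu> \<mu>' h = prod_list (map (lrw \<mu> \<mu>') h)"

lemma change_measure:
  fixes f :: "history \<Rightarrow> real"
  assumes vp: "valid_policy n m \<pi>" and mu: "\<And>a. 0 < \<mu> a \<and> \<mu> a < 1" and mu': "\<And>a. 0 \<le> \<mu>' a \<and> \<mu>' a \<le> 1"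
  shows "measure_pmf.expectation (traj \<pi> \<mu>' t) f = measure_pmf.expectation (traj \<pi> \<mu> t) (\<lambda>h. f h * lr \<mu> \<mu>' h)"
proof (induction t arbitrary: f)
  case 0 then show ?case by (simp add: lr_def)
next
  case (Suc t)
  have mu1: "\<And>a. 0 \<le> \<mu> a \<and> \<mu> a \<le> 1" using mu by (simp add: less_imp_le)
  show ?case
    apply (subst exp_step[OF vp mu'])
    apply (subst Suc.IH)
    apply (subst exp_step[OF vp mu1])
    apply (rule integral_cong_AE, simp, simp)
    apply (unfold AE_measure_pmf_iff, intro ballI)
    apply (subst integral_mult_left_zero[symmetric])
    apply (rule integral_cong_AE, simp, simp)
    apply (unfold AE_measure_pmf_iff, intro ballI)
  proof -
    fix h :: history and ca :: "config \<times> nat"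
    have a: "\<mu> (snd ca) \<noteq> 0" "1 - \<mu> (snd ca) \<noteq> 0" using mu[of "snd ca"] by auto
    show "(\<mu>' (snd ca) * f (h @ [(fst ca, snd ca, True)]) + (1 - \<mu>' (snd ca)) * f (h @ [(fst ca, snd ca, False)])) * lr \<mu> \<mu>' h =
         \<mu> (snd ca) * (f (h @ [(fst ca, snd ca, True)]) * lr \<mu> \<mu>' (h @ [(fst ca, snd ca, True)])) +
         (1 - \<mu> (snd ca)) * (f (h @ [(fst ca, snd ca, False)]) * lr \<mu> \<mu>' (h @ [(fst ca, snd ca, False)]))"
      using a by (simp add: lr_def lrw_def field_simps)
  qed
qed

definition tw :: "nat \<Rightarrow> history \<Rightarrow> history" where
  "tw k h = takeWhile (\<lambda>x. arm x \<le> k) h"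

lemma tw_snoc: "tw k (h @ [x]) = (if \<forall>y\<in>set h. arm y \<le> k then (if arm x \<le> k then h @ [x] else h) else tw k h)"
  by (auto simp: tw_def takeWhile_append)

lemma tw_all: "\<forall>y\<in>set h. arm y \<le> k \<Longrightarrow> tw k h = h"
  by (simp add: tw_def)

definition Zs :: "(nat \<Rightarrow> bool \<Rightarrow> real) \<Rightarrow> nat \<Rightarrow> history \<Rightarrow> real" where
  "Zs \<phi> k h = sum_list (map (\<lambda>x. \<phi> (arm x) (rew x)) (tw k h))"

definition Ws :: "(nat \<Rightarrow> real) \<Rightarrow> nat \<Rightarrow> history \<Rightarrow> real" where
  "Ws V k h = sum_list (map (\<lambda>x. V (arm x)) (tw k h))"

lemma integrable_traj: "valid_policy n m \<pi> \<Longrightarrow> integrable (measure_pmf (traj \<pi> \<mu> t)) (f :: history \<Rightarrow> real)"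
  by (rule integrable_measure_pmf_finite[OF finite_traj])

lemma martingale_sq:
  assumes vp: "valid_policy n m \<pi>" and mu: "\<And>a. 0 \<le> \<mu> a \<and> \<mu> a \<le> 1"
    and mean0: "\<And>a. \<mu> a * \<phi> a True + (1 - \<mu> a) * \<phi> a False = 0"
    and V: "\<And>a. V a = \<mu> a * (\<phi> a True)\<^sup>2 + (1 - \<mu> a) * (\<phi> a False)\<^sup>2"
  shows "measure_pmf.expectation (traj \<pi> \<mu> t) (\<lambda>h. (Zs \<phi> k h)\<^sup>2) = measure_pmf.expectation (traj \<pi> \<mu> t) (Ws V k)"
proof (induction t)
  case 0 then show ?case by (simp add: Zs_def Ws_def tw_def)
next
  case (Suc t)
  define c where "c h = (if \<forall>y\<in>set h. arm y \<le> k then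
     measure_pmf.expectation (\<pi> h) (\<lambda>ca. if snd ca \<le> k then V (snd ca) else 0) else 0)" for h
  have fin: "finite (set_pmf (\<pi> h))" if "h \<in> set_pmf (traj \<pi> \<mu> t)" for h
    using finite_policy[OF vp] traj_support[OF vp that] by blast
  have e1: "measure_pmf.expectation (traj \<pi> \<mu> (Suc t)) (\<lambda>h. (Zs \<phi> k h)\<^sup>2) =
        measure_pmf.expectation (traj \<pi> \<mu> t) (\<lambda>h. (Zs \<phi> k h)\<^sup>2 + c h)"
    apply (subst exp_step[OF vp mu])
    apply (rule integral_cong_AE, simp, simp)
    apply (unfold AE_measure_pmf_iff, intro ballI)
  proof -
    fix h assume hs: "h \<in> set_pmf (traj \<pi> \<mu> t)"
    have int: "integrable (measure_pmf (\<pi> h)) (g :: config \<times> nat \<Rightarrow> real)" for g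
      by (rule integrable_measure_pmf_finite[OF fin[OF hs]])
    show "measure_pmf.expectation (\<pi> h) (\<lambda>ca. \<mu> (snd ca) * (Zs \<phi> k (h @ [(fst ca, snd ca, True)]))\<^sup>2 +
            (1 - \<mu> (snd ca)) * (Zs \<phi> k (h @ [(fst ca, snd ca, False)]))\<^sup>2) = (Zs \<phi> k h)\<^sup>2 + c h"
    proof (cases "\<forall>y\<in>set h. arm y \<le> k")
      case True
      have "measure_pmf.expectation (\<pi> h) (\<lambda>ca. \<mu> (snd ca) * (Zs \<phi> k (h @ [(fst ca, snd ca, True)]))\<^sup>2 +
            (1 - \<mu> (snd ca)) * (Zs \<phi> k (h @ [(fst ca, snd ca, False)]))\<^sup>2) =
            measure_pmf.expectation (\<pi> h) (\<lambda>ca. (Zs \<phi> k h)\<^sup>2 + (if snd ca \<le> k then V (snd ca) else 0))"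
      proof (rule Bochner_Integration.integral_cong, simp)
        fix ca :: "config \<times> nat"
        have z: "Zs \<phi> k (h @ [(fst ca, snd ca, b)]) = Zs \<phi> k h + (if snd ca \<le> k then \<phi> (snd ca) b else 0)" for b
          using True by (simp add: Zs_def tw_snoc tw_all)
        show "\<mu> (snd ca) * (Zs \<phi> k (h @ [(fst ca, snd ca, True)]))\<^sup>2 +
            (1 - \<mu> (snd ca)) * (Zs \<phi> k (h @ [(fst ca, snd ca, False)]))\<^sup>2 =
            (Zs \<phi> k h)\<^sup>2 + (if snd ca \<le> k then V (snd ca) else 0)"
        proof -
          have m0: "\<mu> (snd ca) * \<phi> (snd ca) True + (1 - \<mu> (snd ca)) * \<phi> (snd ca) False = 0" by (rule mean0)
          have "\<mu> (snd ca) * (Zs \<phi> k h + \<phi> (snd ca) True)\<^sup>2 + (1 - \<mu> (snd ca)) * (Zs \<phi> k h + \<phi> (snd ca) False)\<^sup>2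
              = (Zs \<phi> k h)\<^sup>2 + 2 * Zs \<phi> k h * (\<mu> (snd ca) * \<phi> (snd ca) True + (1 - \<mu> (snd ca)) * \<phi> (snd ca) False) + V (snd ca)"
            by (simp add: V power2_eq_square algebra_simps)
          then have eq2: "\<mu> (snd ca) * (Zs \<phi> k h + \<phi> (snd ca) True)\<^sup>2 + (1 - \<mu> (snd ca)) * (Zs \<phi> k h + \<phi> (snd ca) False)\<^sup>2
              = (Zs \<phi> k h)\<^sup>2 + V (snd ca)" using m0 by simp
          show ?thesis
          proof (cases "snd ca \<le> k")
            case True then show ?thesis using eq2 by (simp only: z if_True)
          next
            case False then show ?thesis by (simp add: z algebra_simps)
          qed
        qed
      qed
      also have "\<dots> = (Zs \<phi> k h)\<^sup>2 + c h"
        using True by (simp add: Bochner_Integration.integral_add[OF int int] c_def)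
      finally show ?thesis .
    next
      case False
      have z: "Zs \<phi> k (h @ [x]) = Zs \<phi> k h" for x
      proof -
        have cf: "(\<forall>y\<in>set h. arm y \<le> k) = False" using False by simp
        show ?thesis unfolding Zs_def tw_snoc cf if_False ..
      qed
      show ?thesis using False by (auto simp: z c_def algebra_simps)
    qed
  qed
  have e2: "measure_pmf.expectation (traj \<pi> \<mu> (Suc t)) (Ws V k) =
        measure_pmf.expectation (traj \<pi> \<mu> t) (\<lambda>h. Ws V k h + c h)"
    apply (subst exp_step[OF vp mu])
    apply (rule integral_cong_AE, simp, simp)
    apply (unfold AE_measure_pmf_iff, intro ballI)
  proof -
    fix h assume hs: "h \<in> set_pmf (traj \<pi> \<mu> t)"
    have int: "integrable (measure_pmf (\<pi> h)) (g :: config \<times> nat \<Rightarrow> real)" for g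
      by (rule integrable_measure_pmf_finite[OF fin[OF hs]])
    show "measure_pmf.expectation (\<pi> h) (\<lambda>ca. \<mu> (snd ca) * Ws V k (h @ [(fst ca, snd ca, True)]) +
            (1 - \<mu> (snd ca)) * Ws V k (h @ [(fst ca, snd ca, False)])) = Ws V k h + c h"
    proof (cases "\<forall>y\<in>set h. arm y \<le> k")
      case True
      have w: "Ws V k (h @ [(fst ca, snd ca, b)]) = Ws V k h + (if snd ca \<le> k then V (snd ca) else 0)" for b ca
        using True by (simp add: Ws_def tw_snoc tw_all)
      have "measure_pmf.expectation (\<pi> h) (\<lambda>ca. \<mu> (snd ca) * Ws V k (h @ [(fst ca, snd ca, True)]) +
            (1 - \<mu> (snd ca)) * Ws V k (h @ [(fst ca, snd ca, False)])) =
            measure_pmf.expectation (\<pi> h) (\<lambda>ca. Ws V k h + (if snd ca \<le> k then V (snd ca) else 0))"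
        by (rule Bochner_Integration.integral_cong) (auto simp: w algebra_simps)
      also have "\<dots> = Ws V k h + c h"
        using True by (simp add: Bochner_Integration.integral_add[OF int int] c_def)
      finally show ?thesis .
    next
      case False
      have w: "Ws V k (h @ [x]) = Ws V k h" for x
      proof -
        have cf: "(\<forall>y\<in>set h. arm y \<le> k) = False" using False by simp
        show ?thesis unfolding Ws_def tw_snoc cf if_False ..
      qed
      show ?thesis using False by (auto simp: w c_def algebra_simps)
    qed
  qed
  show ?case
    unfolding e1 e2
    by (simp add: Bochner_Integration.integral_add[OF integrable_traj[OF vp] integrable_traj[OF vp]] Suc.IH)
qed

definition cutk :: "nat \<Rightarrow> history \<Rightarrow> history \<times> bool" where
  "cutk k h = (tw k h, \<forall>y\<in>set h. arm y \<le> k)"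

definition stepK :: "policy \<Rightarrow> (nat \<Rightarrow> real) \<Rightarrow> history \<Rightarrow> history pmf" where
  "stepK \<pi> \<mu> h = bind_pmf (\<pi> h) (\<lambda>(c, a). map_pmf (\<lambda>r. h @ [(c, a, r)]) (bernoulli_pmf (\<mu> a)))"

lemma traj_Suc': "traj \<pi> \<mu> (Suc t) = bind_pmf (traj \<pi> \<mu> t) (stepK \<pi> \<mu>)"
  unfolding stepK_def[abs_def] by simp

lemma coupling:
  assumes "\<And>a. a \<le> k \<Longrightarrow> \<mu> a = \<mu>' a"
  shows "map_pmf (cutk k) (traj \<pi> \<mu> t) = map_pmf (cutk k) (traj \<pi> \<mu>' t)"
proof (induction t)
  case 0 then show ?case by simp
next
  case (Suc t)
  define G where "G \<mu> c = (if snd c then map_pmf (cutk k) (stepK \<pi> \<mu> (fst c)) else return_pmf c)" for \<mu> c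
  have key: "map_pmf (cutk k) (stepK \<pi> \<mu>0 h) = G \<mu>0 (cutk k h)" for \<mu>0 h
  proof (cases "\<forall>y\<in>set h. arm y \<le> k")
    case True
    then show ?thesis by (simp add: G_def cutk_def tw_all)
  next
    case False
    have cf: "(\<forall>y\<in>set h. arm y \<le> k) = False" using False by simp
    have "cutk k (h @ [x]) = cutk k h" for x
      unfolding cutk_def tw_snoc cf if_False using False by simp
    then have "map_pmf (cutk k) (stepK \<pi> \<mu>0 h) = map_pmf (\<lambda>_. cutk k h) (stepK \<pi> \<mu>0 h)"
      by (intro pmf.map_cong) (auto simp: stepK_def split: prod.splits)
    then show ?thesis using False by (auto simp: G_def cutk_def map_pmf_const)
  qed
  have GG: "G \<mu> = G \<mu>'"
  proof
    fix c :: "history \<times> bool"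
    have "map_pmf (cutk k) (stepK \<pi> \<mu> h0) = map_pmf (cutk k) (stepK \<pi> \<mu>' h0)" for h0
      unfolding stepK_def map_bind_pmf
    proof (intro bind_pmf_cong refl)
      fix ca :: "config \<times> nat"
      obtain c0 a where ca: "ca = (c0, a)" by (cases ca)
      show "map_pmf (cutk k) (case ca of (c, a) \<Rightarrow> map_pmf (\<lambda>r. h0 @ [(c, a, r)]) (bernoulli_pmf (\<mu> a))) =
            map_pmf (cutk k) (case ca of (c, a) \<Rightarrow> map_pmf (\<lambda>r. h0 @ [(c, a, r)]) (bernoulli_pmf (\<mu>' a)))"
      proof (cases "a \<le> k")
        case True then show ?thesis using assms ca by simp
      next
        case False
        have "cutk k (h0 @ [(c0, a, r)]) = cutk k (h0 @ [(c0, a, True)])" for r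
          using False by (simp add: cutk_def tw_snoc)
        then have "map_pmf (\<lambda>r. cutk k (h0 @ [(c0, a, r)])) p = return_pmf (cutk k (h0 @ [(c0, a, True)]))" for p
        proof -
          assume eq: "\<And>r. cutk k (h0 @ [(c0, a, r)]) = cutk k (h0 @ [(c0, a, True)])"
          have "map_pmf (\<lambda>r. cutk k (h0 @ [(c0, a, r)])) p = map_pmf (\<lambda>_. cutk k (h0 @ [(c0, a, True)])) p"
            using eq by (intro pmf.map_cong) auto
          then show ?thesis by (simp add: map_pmf_const)
        qed
        then show ?thesis using ca by (simp add: pmf.map_comp o_def)
      qed
    qed simp
    then show "G \<mu> c = G \<mu>' c" by (simp add: G_def)
  qed
  have "map_pmf (cutk k) (traj \<pi> \<mu>0 (Suc t)) = bind_pmf (map_pmf (cutk k) (traj \<pi> \<mu>0 t)) (G \<mu>0)" for \<mu>0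
    by (simp only: traj_Suc' map_bind_pmf key bind_map_pmf)
  then show ?case using Suc.IH GG by simp
qed

locale inst =
  fixes n k :: nat and \<epsilon> :: real
  assumes k2: "2 \<le> k" and kn: "k < n" and epos: "0 < \<epsilon>" and esmall: "(real n + 1) * \<epsilon> \<le> 1/100"
begin

lemma n_pos: "1 \<le> n" using k2 kn by simp

lemma ne_small: "real n * \<epsilon> \<le> 1/100" using esmall epos by (simp add: algebra_simps)

lemma nu_bounds: "1/2 \<le> nu n k \<epsilon> j a \<and> nu n k \<epsilon> j a \<le> 1/2 + (real n + 1) * \<epsilon>"
  using epos n_pos by (auto simp: nu_def algebra_simps)

lemma nu_01: "0 < nu n k \<epsilon> j a \<and> nu n k \<epsilon> j a < 1"
  using nu_bounds[of j a] esmall by auto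

lemma nu'_01: "0 \<le> nu' n k \<epsilon> j a \<and> nu' n k \<epsilon> j a \<le> 1"
  using nu_01[of j a] by (auto simp: nu'_def)

lemma mu_star_1: "mu_star n (nu n k \<epsilon> 1) = 1/2 + real n * \<epsilon>"
  unfolding mu_star_def
proof (rule Max_eqI)
  show "finite (nu n k \<epsilon> 1 ` {1..n})" by simp
  show "y \<le> 1/2 + real n * \<epsilon>" if "y \<in> nu n k \<epsilon> 1 ` {1..n}" for y
    using that epos by (auto simp: nu_def algebra_simps)
  show "1/2 + real n * \<epsilon> \<in> nu n k \<epsilon> 1 ` {1..n}"
    using n_pos by (auto simp: nu_def image_iff intro!: bexI[of _ 1])
qed

lemma mu_star_Suc0[simp]: "mu_star n (nu n k \<epsilon> (Suc 0)) = 1/2 + real n * \<epsilon>"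
  using mu_star_1 by simp

lemma mu_star_j: assumes "2 \<le> j" "j \<le> k" shows "mu_star n (nu n k \<epsilon> j) = 1/2 + (real n + 1) * \<epsilon>"
  unfolding mu_star_def
proof (rule Max_eqI)
  show "finite (nu n k \<epsilon> j ` {1..n})" by simp
  show "y \<le> 1/2 + (real n + 1) * \<epsilon>" if "y \<in> nu n k \<epsilon> j ` {1..n}" for y
    using that nu_bounds by auto
  show "1/2 + (real n + 1) * \<epsilon> \<in> nu n k \<epsilon> j ` {1..n}"
    using assms kn by (auto simp: nu_def image_iff intro!: bexI[of _ j])
qed

lemma mu_star': "mu_star n (nu' n k \<epsilon> j) = 1"
  unfolding mu_star_def
proof (rule Max_eqI)
  show "finite (nu' n k \<epsilon> j ` {1..n})" by simp
  show "y \<le> 1" if "y \<in> nu' n k \<epsilon> j ` {1..n}" for y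
    using that nu'_01 by auto
  show "1 \<in> nu' n k \<epsilon> j ` {1..n}"
    using kn n_pos by (intro image_eqI[of _ _ n]) (auto simp: nu'_def)
qed

lemma gap_self: "1 \<le> j \<Longrightarrow> j \<le> k \<Longrightarrow> gap n (nu n k \<epsilon> j) j = 0"
  by (cases "j = 1") (auto simp: gap_def mu_star_1 mu_star_j nu_def algebra_simps)

lemma gap_nonneg: "1 \<le> j \<Longrightarrow> j \<le> k \<Longrightarrow> 0 \<le> gap n (nu n k \<epsilon> j) a"
  using epos
  by (cases "j = 0 \<or> j = 1") (auto simp: gap_def mu_star_1 mu_star_j nu_def algebra_simps)

lemma gap_ge_eps: "1 \<le> j \<Longrightarrow> j \<le> k \<Longrightarrow> a \<noteq> j \<Longrightarrow> \<epsilon> \<le> gap n (nu n k \<epsilon> j) a"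
  using epos n_pos
  by (cases "j = 1") (auto simp: gap_def mu_star_1 mu_star_j nu_def algebra_simps)

lemma gap_big: "1 \<le> j \<Longrightarrow> j \<le> k \<Longrightarrow> k < a \<Longrightarrow> real n * \<epsilon> \<le> gap n (nu n k \<epsilon> j) a"
  using epos
  by (cases "j = 1") (auto simp: gap_def mu_star_1 mu_star_j nu_def algebra_simps)

lemma gap'_nonneg: "0 \<le> gap n (nu' n k \<epsilon> j) a"
  using nu'_01 by (simp add: gap_def mu_star')

lemma gap'_small: "a \<le> k \<Longrightarrow> 49/100 \<le> gap n (nu' n k \<epsilon> j) a"
  using nu_bounds[of j a] esmall by (simp add: gap_def mu_star' nu'_def)

lemma gap'_big: "k < a \<Longrightarrow> gap n (nu' n k \<epsilon> j) a = 0"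
  by (simp add: gap_def mu_star' nu'_def)

lemma sum_nu:
  fixes \<alpha> :: real
  assumes "1 \<le> \<alpha>" "1 \<le> j" "j \<le> k"
  shows "(\<Sum>i \<in> {i \<in> {1..n}. gap n (nu n k \<epsilon> j) i > 0}. gap n (nu n k \<epsilon> j) i powr (1 - 2 * \<alpha>))
         \<le> real k * \<epsilon> powr (1 - 2 * \<alpha>)"
proof -
  let ?g = "gap n (nu n k \<epsilon> j)" and ?e = "1 - 2 * \<alpha>"
  let ?S = "{i \<in> {1..n}. ?g i > 0}"
  have split: "?S = (?S \<inter> {1..k}) \<union> (?S \<inter> {k+1..n})" by auto
  have "(\<Sum>i\<in>?S. ?g i powr ?e) \<le> (\<Sum>i\<in>?S \<inter> {1..k}. ?g i powr ?e) + (\<Sum>i\<in>?S \<inter> {k+1..n}. ?g i powr ?e)"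
    by (subst split, subst sum.union_disjoint) auto
  also have "(\<Sum>i\<in>?S \<inter> {1..k}. ?g i powr ?e) \<le> (\<Sum>i\<in>{1..k} - {j}. \<epsilon> powr ?e)"
  proof -
    have sub: "?S \<inter> {1..k} \<subseteq> {1..k} - {j}" using gap_self[OF assms(2,3)] by auto
    have "(\<Sum>i\<in>?S \<inter> {1..k}. ?g i powr ?e) \<le> (\<Sum>i\<in>?S \<inter> {1..k}. \<epsilon> powr ?e)"
      apply (rule sum_mono)
      apply (rule powr_mono2')
      using assms epos gap_ge_eps gap_self[OF assms(2,3)] by (auto, metis less_irrefl)
    also have "\<dots> \<le> (\<Sum>i\<in>{1..k} - {j}. \<epsilon> powr ?e)"
      by (rule sum_mono2) (use sub in auto)
    finally show ?thesis .
  qed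
  also have "(\<Sum>i\<in>?S \<inter> {k+1..n}. ?g i powr ?e) \<le> (\<Sum>i\<in>{k+1..n}. (real n * \<epsilon>) powr ?e)"
  proof -
    have "(\<Sum>i\<in>?S \<inter> {k+1..n}. ?g i powr ?e) \<le> (\<Sum>i\<in>?S \<inter> {k+1..n}. (real n * \<epsilon>) powr ?e)"
      apply (rule sum_mono)
      apply (rule powr_mono2')
      using assms epos gap_big n_pos by auto
    also have "\<dots> \<le> (\<Sum>i\<in>{k+1..n}. (real n * \<epsilon>) powr ?e)"
      by (rule sum_mono2) auto
    finally show ?thesis .
  qed
  also have "(\<Sum>i\<in>{k+1..n}. (real n * \<epsilon>) powr ?e) \<le> \<epsilon> powr ?e"
  proof -
    have a: "(real n * \<epsilon>) powr ?e = real n powr ?e * \<epsilon> powr ?e" using n_pos epos by (simp add: powr_mult)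
    have e1: "(\<Sum>i\<in>{k+1..n}. (real n * \<epsilon>) powr ?e) = real (n - k) * (real n powr ?e * \<epsilon> powr ?e)"
      by (simp add: a)
    have e2: "real (n - k) * (real n powr ?e * \<epsilon> powr ?e) \<le> real n * (real n powr ?e * \<epsilon> powr ?e)"
      by (intro mult_right_mono) auto
    have e3: "real n * real n powr ?e = real n powr (2 - 2 * \<alpha>)"
      using n_pos by (subst powr_mult_base) (auto simp: algebra_simps)
    have e4: "real n powr (2 - 2 * \<alpha>) \<le> 1"
      using powr_mono[of "2 - 2 * \<alpha>" 0 "real n"] assms n_pos by simp
    have e5: "real n powr (2 - 2 * \<alpha>) * \<epsilon> powr ?e \<le> \<epsilon> powr ?e"
      using mult_right_mono[OF e4, of "\<epsilon> powr ?e"] by simp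
    have e6: "real n * (real n powr ?e * \<epsilon> powr ?e) = real n powr (2 - 2 * \<alpha>) * \<epsilon> powr ?e"
      using e3 by (simp add: mult.assoc[symmetric])
    show ?thesis unfolding e1 using e2 e5 e6 by linarith
  qed
  finally have "(\<Sum>i\<in>?S. ?g i powr ?e) \<le> real (card ({1..k} - {j})) * \<epsilon> powr ?e + \<epsilon> powr ?e"
    by simp
  also have "card ({1..k} - {j}) = k - 1" using assms by simp
  finally show ?thesis using k2 by (simp add: algebra_simps of_nat_diff)
qed

lemma sum_nu':
  fixes \<alpha> :: real
  assumes "1 \<le> \<alpha>"
  shows "(\<Sum>i \<in> {i \<in> {1..n}. gap n (nu' n k \<epsilon> j) i > 0}. gap n (nu' n k \<epsilon> j) i powr (1 - 2 * \<alpha>))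
         \<le> real k * (49/100) powr (1 - 2 * \<alpha>)"
proof -
  let ?g = "gap n (nu' n k \<epsilon> j)" and ?e = "1 - 2 * \<alpha>"
  let ?S = "{i \<in> {1..n}. ?g i > 0}"
  have sub: "?S \<subseteq> {1..k}"
  proof
    fix x assume "x \<in> ?S" then show "x \<in> {1..k}" using gap'_big[of x j] by (cases "k < x") auto
  qed
  have "(\<Sum>i\<in>?S. ?g i powr ?e) \<le> (\<Sum>i\<in>?S. (49/100) powr ?e)"
    apply (rule sum_mono)
    apply (rule powr_mono2')
    using assms gap'_small sub by auto
  also have "\<dots> \<le> (\<Sum>i\<in>{1..k}. (49/100) powr ?e)"
    by (rule sum_mono2) (use sub in auto)
  finally show ?thesis by simp
qed

end

lemma info_bounds:
  fixes p q \<epsilon> :: real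
  assumes p: "1/2 \<le> p" and q: "q = p + 2 * \<epsilon>" "q \<le> 51/100" and e: "0 < \<epsilon>"
  defines "A \<equiv> ln (q / p)" and "Bv \<equiv> ln ((1 - q) / (1 - p))"
  defines "\<kappa> \<equiv> - (p * A + (1 - p) * Bv)"
  shows "0 \<le> \<kappa>" "\<kappa> \<le> 17 * \<epsilon>\<^sup>2" "p * (A + \<kappa>)\<^sup>2 + (1 - p) * (Bv + \<kappa>)\<^sup>2 \<le> 17 * \<epsilon>\<^sup>2"
proof -
  have p0: "0 < p" "p < 1" "0 < 1 - q" "0 < q" "p \<le> q" "q < 1" using assms by auto
  have lnle: "ln x \<le> x - 1" if "0 < x" for x :: real using ln_le_minus_one[OF that] .
  have lnge: "1 - 1/x \<le> ln x" if "0 < x" for x :: real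
    using lnle[of "1/x"] that by (simp add: ln_div)
  have nA: "- A \<le> p / q - 1" using lnle[of "p/q"] p0 by (simp add: A_def ln_div)
  have nB: "- Bv \<le> (1 - p) / (1 - q) - 1" using lnle[of "(1-p)/(1-q)"] p0 by (simp add: Bv_def ln_div)
  have gA: "1 - q / p \<le> - A" using lnge[of "p/q"] p0 by (simp add: A_def ln_div)
  have gB: "1 - (1 - q) / (1 - p) \<le> - Bv" using lnge[of "(1-p)/(1-q)"] p0 by (simp add: Bv_def ln_div)
  have k_eq: "\<kappa> = p * (- A) + (1 - p) * (- Bv)" by (simp add: \<kappa>_def)
  have "p * (1 - q / p) + (1 - p) * (1 - (1 - q) / (1 - p)) \<le> p * (- A) + (1 - p) * (- Bv)"
    using gA gB p0 by (intro add_mono mult_left_mono) auto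
  moreover have "p * (1 - q / p) + (1 - p) * (1 - (1 - q) / (1 - p)) = 0" using p0 by (simp add: field_simps)
  ultimately show "0 \<le> \<kappa>" using k_eq by simp
  have "p * (- A) + (1 - p) * (- Bv) \<le> p * (p / q - 1) + (1 - p) * ((1 - p) / (1 - q) - 1)"
    using nA nB p0 by (intro add_mono mult_left_mono) auto
  also have "\<dots> = (q - p)\<^sup>2 / (q * (1 - q))" using p0 by (simp add: field_simps power2_eq_square)
  also have "\<dots> = 4 * \<epsilon>\<^sup>2 / (q * (1 - q))" using q by (simp add: power2_eq_square)
  also have "\<dots> \<le> 4 * \<epsilon>\<^sup>2 / (4/17)"
  proof (rule divide_left_mono)
    have "q * (1 - q) \<ge> 51/100 * (49/100)"
    proof -
      have "q * (1 - q) - 51/100 * (49/100) = (q - 49/100) * (51/100 - q)" by (simp add: algebra_simps)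
      moreover have "(q - 49/100) * (51/100 - q) \<ge> 0" using p0 q p by (intro mult_nonneg_nonneg) auto
      ultimately show ?thesis by simp
    qed
    then show "4/17 \<le> q * (1 - q)" by simp
  qed (use p0 in auto)
  finally show "\<kappa> \<le> 17 * \<epsilon>\<^sup>2" using k_eq by simp
  have v_eq: "p * (A + \<kappa>)\<^sup>2 + (1 - p) * (Bv + \<kappa>)\<^sup>2 = p * (1 - p) * (A - Bv)\<^sup>2"
    by (simp add: \<kappa>_def power2_eq_square algebra_simps)
  have AB: "A - Bv = ln ((q * (1 - p)) / (p * (1 - q)))"
    using p0 by (simp add: A_def Bv_def ln_div ln_mult)
  have r1: "1 \<le> (q * (1 - p)) / (p * (1 - q))"
    using p0 by (simp add: field_simps mult_mono)
  have ABnn: "0 \<le> A - Bv" using AB r1 by simp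
  have "A - Bv \<le> (q * (1 - p)) / (p * (1 - q)) - 1" using AB lnle[of "(q * (1 - p)) / (p * (1 - q))"] r1 by simp
  also have "\<dots> = 2 * \<epsilon> / (p * (1 - q))"
  proof -
    have d: "p * (1 - q) \<noteq> 0" using p0 by simp
    have "(q * (1 - p)) / (p * (1 - q)) - 1 = (q * (1 - p) - p * (1 - q)) / (p * (1 - q))"
      using d by (simp add: diff_divide_distrib)
    also have "q * (1 - p) - p * (1 - q) = 2 * \<epsilon>" using q by (simp add: algebra_simps)
    finally show ?thesis .
  qed
  also have "\<dots> \<le> 2 * \<epsilon> / (1/2 * (49/100))"
    using p0 q p e by (intro divide_left_mono mult_mono) auto
  finally have ABle: "A - Bv \<le> 400/49 * \<epsilon>" by simp
  have "p * (1 - p) \<le> 1/4"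
  proof -
    have "1/4 - p * (1 - p) = (p - 1/2)\<^sup>2" by (simp add: power2_eq_square algebra_simps)
    then show ?thesis by (metis diff_ge_0_iff_ge zero_le_power2)
  qed
  moreover have "(A - Bv)\<^sup>2 \<le> (400/49 * \<epsilon>)\<^sup>2" using ABnn ABle by (intro power_mono) auto
  ultimately have "p * (1 - p) * (A - Bv)\<^sup>2 \<le> 1/4 * (400/49 * \<epsilon>)\<^sup>2"
    using p0 by (intro mult_mono) auto
  also have "\<dots> \<le> 17 * \<epsilon>\<^sup>2" by (simp add: power2_eq_square)
  finally show "p * (A + \<kappa>)\<^sup>2 + (1 - p) * (Bv + \<kappa>)\<^sup>2 \<le> 17 * \<epsilon>\<^sup>2" using v_eq by simp
qed

lemma sum_list_ge_len:
  fixes f :: "'a \<Rightarrow> real"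
  assumes "\<And>x. x \<in> set xs \<Longrightarrow> c \<le> f x"
  shows "real (length xs) * c \<le> sum_list (map f xs)"
  using assms by (induction xs) (auto simp: algebra_simps intro!: add_mono)

lemma sum_list_nonneg':
  fixes f :: "'a \<Rightarrow> real"
  assumes "\<And>x. x \<in> set xs \<Longrightarrow> 0 \<le> f x"
  shows "0 \<le> sum_list (map f xs)"
  using assms by (induction xs) auto

locale hard = inst n k \<epsilon> for n k \<epsilon> +
  fixes m :: nat and \<pi> :: policy and T :: nat
  assumes m2: "2 \<le> m" and mk: "m \<le> k" and vp: "valid_policy n m \<pi>" and Tpos: "0 < T"
begin

definition Bh :: "history \<Rightarrow> nat" where "Bh h = length (tw k h)"

abbreviation P where "P \<equiv> traj \<pi> (nu n k \<epsilon> 1) T"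

lemma regret_split: "regret_of n \<mu> h = sum_list (map (\<lambda>x. gap n \<mu> (arm x)) (tw k h)) +
   sum_list (map (\<lambda>x. gap n \<mu> (arm x)) (dropWhile (\<lambda>x. arm x \<le> k) h))"
proof -
  have "h = tw k h @ dropWhile (\<lambda>x. arm x \<le> k) h" by (simp add: tw_def)
  then have "regret_of n \<mu> h = sum_list (map (\<lambda>x. gap n \<mu> (arm x)) (tw k h @ dropWhile (\<lambda>x. arm x \<le> k) h))"
    unfolding regret_of_def by (metis (no_types) sum_list_map_eq_sum_count2 order_refl)
  then show ?thesis by simp
qed

lemma case1: "expected_regret n \<pi> (nu' n k \<epsilon> 1) T \<ge> 49/100 * measure_pmf.expectation P (\<lambda>h. real (Bh h))"
proof -
  have "measure_pmf.expectation (traj \<pi> (nu' n k \<epsilon> 1) T) (\<lambda>h. real (Bh h)) =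
        measure_pmf.expectation (map_pmf (cutk k) (traj \<pi> (nu' n k \<epsilon> 1) T)) (\<lambda>c. real (length (fst c)))"
    by (simp add: Bh_def cutk_def)
  also have "map_pmf (cutk k) (traj \<pi> (nu' n k \<epsilon> 1) T) = map_pmf (cutk k) P"
    by (rule coupling) (simp add: nu'_def)
  also have "measure_pmf.expectation (map_pmf (cutk k) P) (\<lambda>c. real (length (fst c))) =
        measure_pmf.expectation P (\<lambda>h. real (Bh h))"
    by (simp add: Bh_def cutk_def)
  finally have eq: "measure_pmf.expectation (traj \<pi> (nu' n k \<epsilon> 1) T) (\<lambda>h. real (Bh h)) =
        measure_pmf.expectation P (\<lambda>h. real (Bh h))" .
  have "49/100 * measure_pmf.expectation (traj \<pi> (nu' n k \<epsilon> 1) T) (\<lambda>h. real (Bh h)) =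
      measure_pmf.expectation (traj \<pi> (nu' n k \<epsilon> 1) T) (\<lambda>h. 49/100 * real (Bh h))" by simp
  also have "\<dots> \<le> expected_regret n \<pi> (nu' n k \<epsilon> 1) T"
    unfolding expected_regret_def
  proof (rule integral_mono)
    fix h
    have "\<And>x. x \<in> set (tw k h) \<Longrightarrow> 49/100 \<le> gap n (nu' n k \<epsilon> 1) (arm x)"
      by (rule gap'_small) (auto simp: tw_def dest: set_takeWhileD)
    then have "real (Bh h) * (49/100) \<le> sum_list (map (\<lambda>x. gap n (nu' n k \<epsilon> 1) (arm x)) (tw k h))"
      unfolding Bh_def by (rule sum_list_ge_len)
    then have "49/100 * real (Bh h) \<le> sum_list (map (\<lambda>x. gap n (nu' n k \<epsilon> 1) (arm x)) (tw k h))"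
      by (simp add: mult.commute)
    moreover have "0 \<le> sum_list (map (\<lambda>x. gap n (nu' n k \<epsilon> 1) (arm x)) (dropWhile (\<lambda>x. arm x \<le> k) h))"
      by (rule sum_list_nonneg') (simp add: gap'_nonneg)
    ultimately show "49/100 * real (Bh h) \<le> regret_of n (nu' n k \<epsilon> 1) h"
      by (simp add: regret_split)
  qed (auto intro: integrable_traj[OF vp])
  finally show ?thesis using eq by simp
qed

definition Gs :: "nat \<Rightarrow> history set" where
  "Gs j = {h. Bh h < length h \<and> 2 * Bh h \<le> T \<and> j \<notin> fst (fst (h ! Bh h))}"

definition Es :: "history set" where
  "Es = {h. Bh h < length h \<and> 2 * Bh h \<le> T}"

lemma big_arm: "Bh h < length h \<Longrightarrow> k < arm (h ! Bh h)"
  using nth_length_takeWhile[of "\<lambda>x. arm x \<le> k" h] by (simp add: Bh_def tw_def)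

lemma regret_G:
  assumes j: "1 \<le> j" "j \<le> k" and hs: "h \<in> set_pmf (traj \<pi> (nu n k \<epsilon> j) T)" and hG: "h \<in> Gs j"
  shows "\<epsilon> * real T / 2 \<le> regret_of n (nu n k \<epsilon> j) h"
proof -
  from traj_support[OF vp hs] have len: "length h = T" and ok: "hist_ok n m h" by auto
  define b where "b = Bh h"
  have b: "b < T" "2 * b \<le> T" "j \<notin> fst (fst (h ! b))" using hG len by (auto simp: Gs_def b_def)
  have ak: "k < arm (h ! b)" using big_arm b len by (simp add: b_def)
  have am: "arm (h ! b) \<in> fst (fst (h ! b))" using hist_ok_step[OF ok, of b] b len by simp
  have "cinv n m (fst (h ! b))" using hist_cinv[OF ok, of b] b len by simp
  then have "arm (h ! b) < snd (fst (h ! b))" using am by (auto simp: cinv_def)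
  then have jp: "j < snd (fst (h ! b))" using ak j by simp
  have notj: "arm (h ! s) \<noteq> j" if "b \<le> s" "s < T" for s
    using hist_gone_arm[OF ok that(1) _ b(3) jp] that len by simp
  let ?g = "\<lambda>s. gap n (nu n k \<epsilon> j) (arm (h ! s))"
  have "regret_of n (nu n k \<epsilon> j) h = (\<Sum>s = 0..<T. ?g s)"
    unfolding regret_of_def by (simp add: sum_list_sum_nth len)
  also have "\<dots> \<ge> (\<Sum>s = b..<T. ?g s)"
    by (rule sum_mono2) (auto intro: gap_nonneg j)
  also have "(\<Sum>s = b..<T. ?g s) \<ge> (\<Sum>s = b..<T. \<epsilon>)"
    by (rule sum_mono) (use notj j gap_ge_eps in auto)
  finally have "real (T - b) * \<epsilon> \<le> regret_of n (nu n k \<epsilon> j) h" by simp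
  moreover have "real T / 2 \<le> real (T - b)" using b by (simp add: of_nat_diff)
  ultimately show ?thesis using epos
    by (smt (verit) mult_right_mono mult.commute times_divide_eq_left)
qed

lemma count_G:
  assumes hs: "hist_ok n m h" and hE: "h \<in> Es"
  shows "real (k - m + 1) \<le> (\<Sum>j = 1..k. indicator (Gs j) h)"
proof -
  define b where "b = Bh h"
  have b: "b < length h" "2 * b \<le> T" using hE by (auto simp: Es_def b_def)
  define M where "M = fst (fst (h ! b))"
  have ak: "k < arm (h ! b)" using big_arm b by (simp add: b_def)
  have am: "arm (h ! b) \<in> M" using hist_ok_step[OF hs, of b] b by (simp add: M_def)
  have ci: "cinv n m (fst (h ! b))" using hist_cinv[OF hs, of b] b by simp
  then have finM: "finite M" and cM: "card M \<le> m" by (auto simp: cinv_def M_def)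
  have sub: "{1..k} \<inter> M \<subseteq> M - {arm (h ! b)}" using ak by auto
  have "card ({1..k} \<inter> M) \<le> card (M - {arm (h ! b)})" using finM sub by (intro card_mono) auto
  also have "\<dots> = card M - 1" using am finM by simp
  finally have c1: "card ({1..k} \<inter> M) \<le> m - 1" using cM by simp
  have "card {1..k} = card ({1..k} - M) + card ({1..k} \<inter> M)"
    by (metis Diff_Diff_Int card_Diff_subset_Int finite_Int finite_atLeastAtMost inf.cobounded1
        card_mono add.commute le_add_diff_inverse Int_commute card_Diff_subset finite_Diff)
  then have c2: "k - m + 1 \<le> card ({1..k} - M)" using c1 m2 mk by simp
  have "(\<Sum>j = 1..k. indicator (Gs j) h :: real) = (\<Sum>j \<in> {1..k}. if j \<in> {1..k} - M then 1 else 0)"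
    by (rule sum.cong) (auto simp: Gs_def indicator_def b_def[symmetric] M_def b)
  also have "\<dots> = real (card ({1..k} - M))"
  proof -
    have "{1..k} \<inter> {j. j \<in> {1..k} - M} = {1..k} - M" by auto
    then show ?thesis by (subst sum.If_cases) auto
  qed
  finally show ?thesis using c2 by simp
qed

definition Nc :: "nat \<Rightarrow> history \<Rightarrow> nat" where
  "Nc j h = length (filter (\<lambda>x. arm x = j) (tw k h))"

lemma sum_list_if_const:
  fixes c :: real
  shows "sum_list (map (\<lambda>x. if f x = j then c else 0) xs) = c * real (length (filter (\<lambda>x. f x = j) xs))"
  by (induction xs) (auto simp: algebra_simps)

lemma prod_list_exp:
  fixes g :: "'a \<Rightarrow> real"
  assumes "\<And>x. w x = exp (g x)"
  shows "prod_list (map w xs) = exp (sum_list (map g xs))"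
  using assms by (induction xs) (auto simp: exp_add)

lemma in_drop_nth: "x \<in> set (drop b h) \<Longrightarrow> \<exists>s. b \<le> s \<and> s < length h \<and> x = h ! s"
  by (auto simp: in_set_conv_nth) (metis add.commute le_add2 less_diff_conv)

lemma sum_list_zero_helper: "(\<And>x. x \<in> set xs \<Longrightarrow> (g x :: real) = 0) \<Longrightarrow> sum_list (map g xs) = 0"
  by (induction xs) auto

lemma nu_other: "2 \<le> j \<Longrightarrow> a \<noteq> j \<Longrightarrow> nu n k \<epsilon> 1 a = nu n k \<epsilon> j a"
  by (simp add: nu_def)

lemma change:
  assumes j: "2 \<le> j" "j \<le> k"
  shows "measure (measure_pmf (traj \<pi> (nu n k \<epsilon> j) T)) (Gs j) \<ge>
         measure (measure_pmf P) (Gs j) / 2 - 26 * \<epsilon>\<^sup>2 * measure_pmf.expectation P (\<lambda>h. real (Nc j h))"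
proof -
  define \<mu>1 where "\<mu>1 = nu n k \<epsilon> 1"
  define \<mu>j where "\<mu>j = nu n k \<epsilon> j"
  define p where "p = \<mu>1 j"
  define q where "q = \<mu>j j"
  have pv: "p = 1/2 + (real n - 1) * \<epsilon>" using j by (simp add: p_def \<mu>1_def nu_def)
  have qv: "q = 1/2 + (real n + 1) * \<epsilon>" using j by (simp add: q_def \<mu>j_def nu_def)
  have p12: "1/2 \<le> p" using pv n_pos epos by simp
  have qp: "q = p + 2 * \<epsilon>" using pv qv by (simp add: algebra_simps)
  have q51: "q \<le> 51/100" using qv esmall by simp
  define A where "A = ln (q / p)"
  define Bv where "Bv = ln ((1 - q) / (1 - p))"
  define \<kappa> where "\<kappa> = - (p * A + (1 - p) * Bv)"
  define v where "v = p * (A + \<kappa>)\<^sup>2 + (1 - p) * (Bv + \<kappa>)\<^sup>2"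
  have ib: "0 \<le> \<kappa>" "\<kappa> \<le> 17 * \<epsilon>\<^sup>2" "v \<le> 17 * \<epsilon>\<^sup>2"
    using info_bounds[OF p12 qp q51 epos] by (simp_all add: A_def Bv_def \<kappa>_def v_def)
  define \<phi> where "\<phi> a r = (if a = j then (if r then A else Bv) + \<kappa> else 0)" for a r
  define V where "V a = (if a = j then v else 0)" for a
  have mu1: "\<And>a. 0 \<le> \<mu>1 a \<and> \<mu>1 a \<le> 1" using nu_01 by (simp add: \<mu>1_def less_imp_le)
  have mean0: "\<mu>1 a * \<phi> a True + (1 - \<mu>1 a) * \<phi> a False = 0" for a
    by (simp add: \<phi>_def p_def[symmetric] \<kappa>_def algebra_simps)
  have Vd: "V a = \<mu>1 a * (\<phi> a True)\<^sup>2 + (1 - \<mu>1 a) * (\<phi> a False)\<^sup>2" for a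
    by (simp add: V_def \<phi>_def p_def[symmetric] v_def)
  have msq: "measure_pmf.expectation P (\<lambda>h. (Zs \<phi> k h)\<^sup>2) = measure_pmf.expectation P (Ws V k)"
    using martingale_sq[where \<phi>=\<phi> and V=V, OF vp mu1 mean0 Vd] by (simp add: \<mu>1_def)
  have Ws_eq: "Ws V k h = v * real (Nc j h)" for h
    unfolding Ws_def Nc_def V_def by (rule sum_list_if_const)
  define g where "g x = \<phi> (arm x) (rew x) - (if arm x = j then \<kappa> else 0)" for x :: "config \<times> nat \<times> bool"
  have p0: "0 < p" "p < 1" "0 < q" "q < 1" using nu_01 by (auto simp: p_def q_def \<mu>1_def \<mu>j_def)
  have lrw_eq: "lrw \<mu>1 \<mu>j x = exp (g x)" for x
  proof (cases "arm x = j")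
    case True
    then show ?thesis using p0
      by (auto simp: lrw_def g_def \<phi>_def A_def Bv_def p_def[symmetric] q_def[symmetric])
  next
    case False
    have "\<mu>1 (arm x) = \<mu>j (arm x)" using nu_other[OF j(1) False] by (simp add: \<mu>1_def \<mu>j_def)
    moreover have "0 < \<mu>j (arm x)" "\<mu>j (arm x) < 1" using nu_01 by (auto simp: \<mu>j_def)
    ultimately show ?thesis using False by (simp add: lrw_def g_def \<phi>_def)
  qed
  have lr_eq: "lr \<mu>1 \<mu>j h = exp (sum_list (map g h))" for h
    unfolding lr_def by (rule prod_list_exp[OF lrw_eq])
  have Zsum: "sum_list (map g (tw k h)) = Zs \<phi> k h - \<kappa> * real (Nc j h)" for h
    unfolding g_def Zs_def Nc_def
    by (simp add: sum_list_subtractf sum_list_if_const[of arm j \<kappa>])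
  have onG: "lr \<mu>1 \<mu>j h = exp (Zs \<phi> k h - \<kappa> * real (Nc j h))"
    if hs: "h \<in> set_pmf P" and hG: "h \<in> Gs j" for h
  proof -
    from traj_support[OF vp hs] have len: "length h = T" and ok: "hist_ok n m h" by auto
    define b where "b = Bh h"
    have b: "b < T" "j \<notin> fst (fst (h ! b))" using hG len by (auto simp: Gs_def b_def)
    have ak: "k < arm (h ! b)" using big_arm b len by (simp add: b_def)
    have am: "arm (h ! b) \<in> fst (fst (h ! b))" using hist_ok_step[OF ok, of b] b len by simp
    have "cinv n m (fst (h ! b))" using hist_cinv[OF ok, of b] b len by simp
    then have "arm (h ! b) < snd (fst (h ! b))" using am by (auto simp: cinv_def)
    then have jp: "j < snd (fst (h ! b))" using ak j by simp
    have notj: "arm (h ! s) \<noteq> j" if "b \<le> s" "s < T" for s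
      using hist_gone_arm[OF ok that(1) _ b(2) jp] that len by simp
    have hsplit: "h = tw k h @ drop b h" by (simp add: tw_def b_def Bh_def dropWhile_eq_drop[symmetric])
    have "sum_list (map g (drop b h)) = 0"
    proof -
      have "g x = 0" if "x \<in> set (drop b h)" for x
        using in_drop_nth[OF that] notj len by (auto simp: g_def \<phi>_def)
      then show ?thesis using sum_list_zero_helper by blast
    qed
    then have "sum_list (map g h) = sum_list (map g (tw k h))"
      by (subst hsplit) simp
    then show ?thesis using lr_eq Zsum by simp
  qed
  have pw: "indicator (Gs j) h * lr \<mu>1 \<mu>j h \<ge> indicator (Gs j) h / 2 - (Zs \<phi> k h)\<^sup>2 / 2 - \<kappa> * real (Nc j h)"
    if hs: "h \<in> set_pmf P" for h
  proof (cases "h \<in> Gs j")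
    case True
    let ?Z = "Zs \<phi> k h" and ?N = "real (Nc j h)"
    have e1: "1 + (?Z - \<kappa> * ?N) \<le> exp (?Z - \<kappa> * ?N)" by (rule exp_ge_add_one_self)
    have e2: "1/2 - ?Z\<^sup>2 / 2 \<le> 1 + ?Z"
    proof -
      have "0 \<le> (?Z + 1)\<^sup>2 / 2" by simp
      then show ?thesis by (simp add: power2_eq_square algebra_simps)
    qed
    show ?thesis unfolding indicator_simps(1)[OF True] onG[OF hs True] using e1 e2 by linarith
  next
    case False
    have "0 \<le> \<kappa> * real (Nc j h)" using ib by simp
    moreover have "0 \<le> (Zs \<phi> k h)\<^sup>2 / 2" by simp
    ultimately show ?thesis unfolding indicator_simps(2)[OF False] by linarith
  qed
  have "measure (measure_pmf (traj \<pi> (nu n k \<epsilon> j) T)) (Gs j) =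
        measure_pmf.expectation (traj \<pi> \<mu>j T) (indicator (Gs j))"
    by (simp add: \<mu>j_def)
  also have "\<dots> = measure_pmf.expectation P (\<lambda>h. indicator (Gs j) h * lr \<mu>1 \<mu>j h)"
    using change_measure[OF vp, of \<mu>1 \<mu>j T "indicator (Gs j)"] nu_01 nu'_01
    by (simp add: \<mu>1_def \<mu>j_def less_imp_le)
  also have "\<dots> \<ge> measure_pmf.expectation P (\<lambda>h. indicator (Gs j) h / 2 - (Zs \<phi> k h)\<^sup>2 / 2 - \<kappa> * real (Nc j h))"
    by (rule integral_mono_AE) (auto simp: AE_measure_pmf_iff intro!: integrable_traj[OF vp] pw)
  also have "measure_pmf.expectation P (\<lambda>h. indicator (Gs j) h / 2 - (Zs \<phi> k h)\<^sup>2 / 2 - \<kappa> * real (Nc j h))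
      = measure (measure_pmf P) (Gs j) / 2 - v / 2 * measure_pmf.expectation P (\<lambda>h. real (Nc j h))
        - \<kappa> * measure_pmf.expectation P (\<lambda>h. real (Nc j h))"
  proof -
    have i: "integrable (measure_pmf P) (f :: history \<Rightarrow> real)" for f by (rule integrable_traj[OF vp])
    have "measure_pmf.expectation P (\<lambda>h. (Zs \<phi> k h)\<^sup>2 / 2) = v / 2 * measure_pmf.expectation P (\<lambda>h. real (Nc j h))"
    proof -
      have "Ws V k = (\<lambda>h. v * real (Nc j h))" by (rule ext) (rule Ws_eq)
      then show ?thesis using msq by simp
    qed
    moreover have "measure_pmf.expectation P (\<lambda>h. indicator (Gs j) h / 2 - (Zs \<phi> k h)\<^sup>2 / 2 - \<kappa> * real (Nc j h))
       = measure_pmf.expectation P (\<lambda>h. indicator (Gs j) h / 2) - measure_pmf.expectation P (\<lambda>h. (Zs \<phi> k h)\<^sup>2 / 2)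
         - measure_pmf.expectation P (\<lambda>h. \<kappa> * real (Nc j h))"
      using Bochner_Integration.integral_diff[OF i i, of "\<lambda>h. indicator (Gs j) h / 2 - (Zs \<phi> k h)\<^sup>2 / 2" "\<lambda>h. \<kappa> * real (Nc j h)"]
        Bochner_Integration.integral_diff[OF i i, of "\<lambda>h. indicator (Gs j) h / 2" "\<lambda>h. (Zs \<phi> k h)\<^sup>2 / 2"]
      by simp
    moreover have "measure_pmf.expectation P (\<lambda>h. indicator (Gs j) h / 2 :: real) = measure (measure_pmf P) (Gs j) / 2"
      by simp
    ultimately show ?thesis by simp
  qed
  finally have "measure (measure_pmf P) (Gs j) / 2 - (v / 2 + \<kappa>) * measure_pmf.expectation P (\<lambda>h. real (Nc j h))
      \<le> measure (measure_pmf (traj \<pi> (nu n k \<epsilon> j) T)) (Gs j)" by (simp add: algebra_simps)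
  moreover have "(v / 2 + \<kappa>) * measure_pmf.expectation P (\<lambda>h. real (Nc j h))
      \<le> 26 * \<epsilon>\<^sup>2 * measure_pmf.expectation P (\<lambda>h. real (Nc j h))"
    using ib by (intro mult_right_mono integral_nonneg_AE) auto
  ultimately show ?thesis by simp
qed

lemma sum_filter_le:
  assumes "finite S"
  shows "(\<Sum>j\<in>S. real (length (filter (\<lambda>x. f x = j) xs))) \<le> real (length xs)"
proof (induction xs)
  case Nil then show ?case by simp
next
  case (Cons x xs)
  have "(\<Sum>j\<in>S. real (length (filter (\<lambda>x. f x = j) (x # xs)))) =
        (\<Sum>j\<in>S. real (length (filter (\<lambda>x. f x = j) xs))) + (\<Sum>j\<in>S. if f x = j then 1 else 0)"
    by (simp add: sum.distrib[symmetric] of_nat_add[symmetric] del: of_nat_add) (rule sum.cong, auto)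
  also have "(\<Sum>j\<in>S. if f x = j then (1::real) else 0) \<le> 1"
    using assms by (simp add: sum.delta)
  finally show ?case using Cons by simp
qed

abbreviation D where "D \<equiv> measure_pmf.expectation P (\<lambda>h. real (Bh h))"

lemma D_nonneg: "0 \<le> D" by (rule integral_nonneg_AE) auto

lemma sumQ:
  "(\<Sum>j = 1..k. measure (measure_pmf (traj \<pi> (nu n k \<epsilon> j) T)) (Gs j)) \<ge>
     real (k - m + 1) / 2 * (1 - 2 * D / real T) - 26 * \<epsilon>\<^sup>2 * D"
proof -
  have i: "integrable (measure_pmf P) (f :: history \<Rightarrow> real)" for f by (rule integrable_traj[OF vp])
  let ?N = "\<lambda>j. measure_pmf.expectation P (\<lambda>h. real (Nc j h))"
  have each: "measure (measure_pmf (traj \<pi> (nu n k \<epsilon> j) T)) (Gs j) \<ge> measure (measure_pmf P) (Gs j) / 2 - 26 * \<epsilon>\<^sup>2 * ?N j"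
    if "j \<in> {1..k}" for j
  proof (cases "j = 1")
    case True
    have "0 \<le> ?N j" by (rule integral_nonneg_AE) auto
    then have a: "0 \<le> 26 * \<epsilon>\<^sup>2 * ?N j" by simp
    have b: "0 \<le> measure (measure_pmf P) (Gs j)" by simp
    have eq: "traj \<pi> (nu n k \<epsilon> j) T = P" using True by simp
    show ?thesis unfolding eq using a b by linarith
  next
    case False
    then show ?thesis using change[of j] that by simp
  qed
  have "(\<Sum>j = 1..k. measure (measure_pmf (traj \<pi> (nu n k \<epsilon> j) T)) (Gs j)) \<ge>
        (\<Sum>j = 1..k. measure (measure_pmf P) (Gs j) / 2 - 26 * \<epsilon>\<^sup>2 * ?N j)"
    by (rule sum_mono) (rule each)
  moreover have "(\<Sum>j = 1..k. measure (measure_pmf P) (Gs j) / 2 - 26 * \<epsilon>\<^sup>2 * ?N j) =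
        (\<Sum>j = 1..k. measure (measure_pmf P) (Gs j)) / 2 - 26 * \<epsilon>\<^sup>2 * (\<Sum>j = 1..k. ?N j)"
    by (simp add: sum_subtractf sum_divide_distrib sum_distrib_left)
  moreover have "(\<Sum>j = 1..k. ?N j) \<le> D"
  proof -
    have "(\<Sum>j = 1..k. ?N j) = measure_pmf.expectation P (\<lambda>h. \<Sum>j = 1..k. real (Nc j h))"
      by (rule Bochner_Integration.integral_sum[symmetric]) (rule i)
    also have "\<dots> \<le> D"
      by (rule integral_mono[OF i i]) (auto simp: Nc_def Bh_def intro: sum_filter_le)
    finally show ?thesis .
  qed
  moreover have "(\<Sum>j = 1..k. measure (measure_pmf P) (Gs j)) \<ge> real (k - m + 1) * (1 - 2 * D / real T)"
  proof -
    have "(\<Sum>j = 1..k. measure (measure_pmf P) (Gs j)) = measure_pmf.expectation P (\<lambda>h. \<Sum>j = 1..k. indicator (Gs j) h)"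
      by (subst Bochner_Integration.integral_sum) (auto intro: integrable_traj[OF vp])
    also have "\<dots> \<ge> measure_pmf.expectation P (\<lambda>h. real (k - m + 1) * (1 - 2 * real (Bh h) / real T))"
    proof (rule integral_mono_AE[OF i i])
      show "AE h in measure_pmf P. real (k - m + 1) * (1 - 2 * real (Bh h) / real T) \<le> (\<Sum>j = 1..k. indicator (Gs j) h)"
        unfolding AE_measure_pmf_iff
      proof
        fix h assume hs: "h \<in> set_pmf P"
        from traj_support[OF vp hs] have len: "length h = T" and ok: "hist_ok n m h" by auto
        show "real (k - m + 1) * (1 - 2 * real (Bh h) / real T) \<le> (\<Sum>j = 1..k. indicator (Gs j) h)"
        proof (cases "h \<in> Es")
          case True
          have "real (k - m + 1) * (1 - 2 * real (Bh h) / real T) \<le> real (k - m + 1)"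
            using Tpos by (intro mult_left_le) auto
          then show ?thesis using count_G[OF ok True] by linarith
        next
          case False
          then have "real T \<le> 2 * real (Bh h)" using len by (auto simp: Es_def)
          then have "1 - 2 * real (Bh h) / real T \<le> 0" using Tpos by (simp add: field_simps)
          then have "real (k - m + 1) * (1 - 2 * real (Bh h) / real T) \<le> 0"
            by (simp add: mult_nonneg_nonpos)
          moreover have "0 \<le> (\<Sum>j = 1..k. indicator (Gs j) h :: real)" by (simp add: sum_nonneg)
          ultimately show ?thesis by linarith
        qed
      qed
    qed
    also have "measure_pmf.expectation P (\<lambda>h. real (k - m + 1) * (1 - 2 * real (Bh h) / real T)) =
        real (k - m + 1) * (1 - 2 * D / real T)"
      using Bochner_Integration.integral_diff[OF i i, of "\<lambda>_. 1" "\<lambda>h. 2 * real (Bh h) / real T"]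
      by simp
    finally show ?thesis .
  qed
  ultimately show ?thesis
  proof -
    assume h1: "(\<Sum>j = 1..k. measure (measure_pmf P) (Gs j) / 2 - 26 * \<epsilon>\<^sup>2 * ?N j)
        \<le> (\<Sum>j = 1..k. measure (measure_pmf (traj \<pi> (nu n k \<epsilon> j) T)) (Gs j))"
      and h2: "(\<Sum>j = 1..k. measure (measure_pmf P) (Gs j) / 2 - 26 * \<epsilon>\<^sup>2 * ?N j) =
        (\<Sum>j = 1..k. measure (measure_pmf P) (Gs j)) / 2 - 26 * \<epsilon>\<^sup>2 * (\<Sum>j = 1..k. ?N j)"
      and h3: "(\<Sum>j = 1..k. ?N j) \<le> D"
      and h4: "real (k - m + 1) * (1 - 2 * D / real T) \<le> (\<Sum>j = 1..k. measure (measure_pmf P) (Gs j))"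
    have h5: "26 * \<epsilon>\<^sup>2 * (\<Sum>j = 1..k. ?N j) \<le> 26 * \<epsilon>\<^sup>2 * D"
      using h3 by (intro mult_left_mono) auto
    have h6: "real (k - m + 1) / 2 * (1 - 2 * D / real T) = (real (k - m + 1) * (1 - 2 * D / real T)) / 2"
      by simp
    have lin: "\<And>x y a c b d e :: real. x \<le> y \<Longrightarrow> x = a/2 - c \<Longrightarrow> b \<le> a \<Longrightarrow> c \<le> d \<Longrightarrow> e = b/2 \<Longrightarrow> e - d \<le> y"
      by linarith
    show ?thesis by (rule lin[OF h1 h2 h4 h5 h6])
  qed
qed

end

lemma powr_facts:
  fixes \<alpha> k T \<epsilon> c :: real
  assumes a: "1 \<le> \<alpha>" and k: "0 < k" and T: "0 < T"
    and e: "\<epsilon> = 1/4 * (k / T) powr (1 / (2 + 2 * \<alpha>))"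
  shows "2 / 16 powr (\<alpha> + 1) * (c * T powr (1 / (\<alpha> + 1)) / k powr (1 + 1 / (\<alpha> + 1))) * k
           = 2 * c / (256 * 16 powr \<alpha> * \<epsilon>\<^sup>2)"
    and "T = k / (16 * 16 powr \<alpha> * \<epsilon>\<^sup>2 * \<epsilon> powr (2 * \<alpha>))"
proof -
  have "0 < (k / T) powr (1 / (2 + 2 * \<alpha>))" using k T by simp
  then have e0: "0 < \<epsilon>" unfolding e by simp
  have kT: "0 < k / T" using k T by simp
  have a2: "2 + 2 * \<alpha> \<noteq> 0" using a by simp
  have e4: "4 * \<epsilon> = (k / T) powr (1 / (2 + 2 * \<alpha>))" using e by simp
  have "(4 * \<epsilon>) powr (2 + 2 * \<alpha>) = ((k / T) powr (1 / (2 + 2 * \<alpha>))) powr (2 + 2 * \<alpha>)"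
    by (simp only: e4)
  also have "\<dots> = (k / T) powr 1" using a2 by (simp add: powr_powr)
  also have "\<dots> = k / T" using k T by simp
  finally have "(4 * \<epsilon>) powr (2 + 2 * \<alpha>) = k / T" .
  moreover have "(4 * \<epsilon>) powr (2 + 2 * \<alpha>) = 16 * 16 powr \<alpha> * \<epsilon>\<^sup>2 * \<epsilon> powr (2 * \<alpha>)"
  proof -
    have "(4 * \<epsilon>) powr (2 + 2 * \<alpha>) = (4 * \<epsilon>) powr 2 * (4 * \<epsilon>) powr (2 * \<alpha>)" by (simp add: powr_add)
    also have "(4 * \<epsilon>) powr 2 = 16 * \<epsilon>\<^sup>2" using e0 by (simp add: powr_realpow' power2_eq_square[symmetric] power_mult_distrib)
    also have "(4 * \<epsilon>) powr (2 * \<alpha>) = 4 powr (2 * \<alpha>) * \<epsilon> powr (2 * \<alpha>)" using e0 by (simp add: powr_mult)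
    also have "4 powr (2 * \<alpha>) = 16 powr \<alpha>"
    proof -
      have "(4::real) powr (2 * \<alpha>) = (4 powr 2) powr \<alpha>" by (simp only: powr_powr)
      moreover have "(4::real) powr 2 = 16" by simp
      ultimately show ?thesis by simp
    qed
    finally show ?thesis by simp
  qed
  ultimately have kT': "k / T = 16 * 16 powr \<alpha> * \<epsilon>\<^sup>2 * \<epsilon> powr (2 * \<alpha>)" by simp
  then show T': "T = k / (16 * 16 powr \<alpha> * \<epsilon>\<^sup>2 * \<epsilon> powr (2 * \<alpha>))" using T e0
    by (simp add: field_simps)
  have Tp: "T powr (1 / (\<alpha> + 1)) = k powr (1 / (\<alpha> + 1)) / (16 * \<epsilon>\<^sup>2)"
  proof -
    have "(k / T) powr (1 / (\<alpha> + 1)) = ((4 * \<epsilon>) powr (2 + 2 * \<alpha>)) powr (1 / (\<alpha> + 1))"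
      using \<open>(4 * \<epsilon>) powr (2 + 2 * \<alpha>) = k / T\<close> by simp
    also have "\<dots> = (4 * \<epsilon>) powr 2"
    proof -
      have "(2 + 2 * \<alpha>) * (1 / (\<alpha> + 1)) = 2" using a by (simp add: field_simps)
      then show ?thesis by (simp only: powr_powr)
    qed
    also have "\<dots> = 16 * \<epsilon>\<^sup>2" using e0 by (simp add: powr_realpow' power2_eq_square[symmetric] power_mult_distrib)
    finally have "k powr (1 / (\<alpha> + 1)) / T powr (1 / (\<alpha> + 1)) = 16 * \<epsilon>\<^sup>2" using k T by (simp add: powr_divide)
    then show ?thesis using e0 k T by (simp add: field_simps)
  qed
  have kp: "k powr (1 + 1 / (\<alpha> + 1)) = k * k powr (1 / (\<alpha> + 1))" using k by (simp add: powr_add)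
  have s16: "(16::real) powr (\<alpha> + 1) = 16 * 16 powr \<alpha>" by (simp add: powr_add)
  have pos: "0 < k powr (1 / (\<alpha> + 1))" using k by simp
  show "2 / 16 powr (\<alpha> + 1) * (c * T powr (1 / (\<alpha> + 1)) / k powr (1 + 1 / (\<alpha> + 1))) * k
           = 2 * c / (256 * 16 powr \<alpha> * \<epsilon>\<^sup>2)"
    unfolding Tp kp s16 using pos k e0 by (simp add: field_simps)
qed

context hard begin

lemma regret_bound:
  assumes j: "1 \<le> j" "j \<le> k"
  shows "\<epsilon> * real T / 2 * measure (measure_pmf (traj \<pi> (nu n k \<epsilon> j) T)) (Gs j) \<le> expected_regret n \<pi> (nu n k \<epsilon> j) T"
proof -
  have "\<epsilon> * real T / 2 * measure (measure_pmf (traj \<pi> (nu n k \<epsilon> j) T)) (Gs j) =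
        measure_pmf.expectation (traj \<pi> (nu n k \<epsilon> j) T) (\<lambda>h. \<epsilon> * real T / 2 * indicator (Gs j) h)"
    by simp
  also have "\<dots> \<le> expected_regret n \<pi> (nu n k \<epsilon> j) T"
    unfolding expected_regret_def
  proof (rule integral_mono_AE[OF integrable_traj[OF vp] integrable_traj[OF vp]])
    show "AE h in measure_pmf (traj \<pi> (nu n k \<epsilon> j) T). \<epsilon> * real T / 2 * indicator (Gs j) h \<le> regret_of n (nu n k \<epsilon> j) h"
      unfolding AE_measure_pmf_iff
    proof
      fix h assume hs: "h \<in> set_pmf (traj \<pi> (nu n k \<epsilon> j) T)"
      show "\<epsilon> * real T / 2 * indicator (Gs j) h \<le> regret_of n (nu n k \<epsilon> j) h"
      proof (cases "h \<in> Gs j")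
        case True then show ?thesis using regret_G[OF j hs True] by simp
      next
        case False
        have "0 \<le> regret_of n (nu n k \<epsilon> j) h"
          unfolding regret_of_def by (rule sum_list_nonneg') (rule gap_nonneg[OF j])
        then show ?thesis using False by simp
      qed
    qed
  qed
  finally show ?thesis .
qed

lemma final:
  fixes \<alpha> :: real
  assumes a: "1 \<le> \<alpha>" and e: "\<epsilon> = eps \<alpha> k T"
  shows "\<exists>\<nu> \<in> hard_instances n k \<epsilon>.
           expected_regret n \<pi> \<nu> T >
             2 / 16 powr (\<alpha> + 1)
             * ((real k - real m + 1) * real T powr (1 / (\<alpha> + 1))
                / real k powr (1 + 1 / (\<alpha> + 1)))
             * (\<Sum>i \<in> {i \<in> {1..n}. gap n \<nu> i > 0}. gap n \<nu> i powr (1 - 2 * \<alpha>))"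
proof -
  define c where "c = real k - real m + 1"
  define C where "C = 2 / 16 powr (\<alpha> + 1) * (c * real T powr (1 / (\<alpha> + 1)) / real k powr (1 + 1 / (\<alpha> + 1)))"
  have c1: "1 \<le> c" using mk by (simp add: c_def)
  have ck: "c \<le> real k" using m2 by (simp add: c_def)
  have cnat: "real (k - m + 1) = c" using mk by (simp add: c_def of_nat_diff)
  have kpos: "0 < real k" using k2 by simp
  have Tp: "0 < real T" using Tpos by simp
  have e': "\<epsilon> = 1/4 * (real k / real T) powr (1 / (2 + 2 * \<alpha>))" using e by (simp add: eps_def)
  define s where "s = (16::real) powr \<alpha>"
  define e2a where "e2a = \<epsilon> powr (2 * \<alpha>)"
  have CK: "C * real k = 2 * c / (256 * s * \<epsilon>\<^sup>2)"
    using powr_facts(1)[OF a kpos Tp e', of c] by (simp add: C_def s_def)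
  have TT: "real T = real k / (16 * s * \<epsilon>\<^sup>2 * e2a)"
    using powr_facts(2)[OF a kpos Tp e'] by (simp add: s_def e2a_def)
  have s0: "0 < s" by (simp add: s_def)
  have e2a0: "0 < e2a" using epos by (simp add: e2a_def)
  have C0: "0 \<le> C" using c1 by (simp add: C_def)
  define g :: real where "g = 49/100"
  define gp where "gp = g powr (2 * \<alpha>)"
  have gp0: "0 < gp" by (simp add: gp_def g_def)
  define D0 where "D0 = C * real k / gp"
  show ?thesis
  proof (cases "D > D0")
    case True
    let ?\<nu> = "nu' n k \<epsilon> 1"
    have mem: "?\<nu> \<in> hard_instances n k \<epsilon>" using k2 by (auto simp: hard_instances_def)
    have "g powr (1 - 2 * \<alpha>) = g / gp" by (simp add: gp_def g_def powr_diff)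
    then have eq: "49/100 * D0 = C * real k * g powr (1 - 2 * \<alpha>)" by (simp add: D0_def g_def)
    have "C * (\<Sum>i \<in> {i \<in> {1..n}. gap n ?\<nu> i > 0}. gap n ?\<nu> i powr (1 - 2 * \<alpha>)) \<le> C * (real k * g powr (1 - 2 * \<alpha>))"
      using sum_nu'[OF a, of 1] C0 by (intro mult_left_mono) (auto simp: g_def)
    also have "\<dots> = 49/100 * D0" using eq by simp
    also have "\<dots> < 49/100 * D" using True by simp
    also have "\<dots> \<le> expected_regret n \<pi> ?\<nu> T" by (rule case1)
    finally show ?thesis using mem unfolding C_def c_def by blast
  next
    case False
    then have DD0: "D \<le> D0" by simp
    have eps_small: "\<epsilon> \<le> 1/300" using esmall n_pos epos
    proof -
      have "3 * \<epsilon> \<le> (real n + 1) * \<epsilon>" using n_pos kn k2 epos by (intro mult_right_mono) auto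
      then show ?thesis using esmall by simp
    qed
    have sgp: "s * gp \<ge> 16 * g\<^sup>2"
    proof -
      have "gp = (g powr 2) powr \<alpha>" by (simp only: gp_def powr_powr)
      also have "g powr 2 = g\<^sup>2" by (simp add: g_def powr_realpow')
      finally have "s * gp = 16 powr \<alpha> * (g\<^sup>2) powr \<alpha>" by (simp add: s_def)
      also have "\<dots> = (16 * g\<^sup>2) powr \<alpha>" by (rule powr_mult[symmetric])
      also have "(16 * g\<^sup>2) powr \<alpha> \<ge> (16 * g\<^sup>2) powr 1" using a by (intro powr_mono) (auto simp: g_def power2_eq_square)
      finally show ?thesis by (simp add: g_def)
    qed
    have D0v: "D0 = 2 * c / (256 * \<epsilon>\<^sup>2 * (s * gp))" using CK by (simp add: D0_def field_simps)
    have D0b: "26 * \<epsilon>\<^sup>2 * D0 \<le> 6/100 * c"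
    proof -
      have "26 * \<epsilon>\<^sup>2 * D0 = 52 * c / (256 * (s * gp))" using epos by (simp add: D0v field_simps)
      also have "\<dots> \<le> 52 * c / (256 * (16 * g\<^sup>2))" using sgp c1 s0 gp0 by (intro divide_left_mono mult_pos_pos) (auto simp: g_def mult.commute)
      also have "\<dots> = (52 / (256 * (16 * g\<^sup>2))) * c" by simp
      also have "\<dots> \<le> 6/100 * c" using c1 by (intro mult_right_mono) (auto simp: g_def power2_eq_square)
      finally show ?thesis .
    qed
    have D0T: "2 * D0 / real T \<le> 1/100"
    proof -
      have eq: "2 * D0 / real T = c / (4 * real k) * (e2a / gp)"
        using epos s0 gp0 e2a0 kpos by (simp add: D0v TT field_simps)
      have "e2a / gp = (\<epsilon> / g) powr (2 * \<alpha>)" unfolding e2a_def gp_def by (rule powr_divide[symmetric])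
      also have "(\<epsilon> / g) powr (2 * \<alpha>) \<le> (\<epsilon> / g) powr 2"
        using a epos eps_small by (intro powr_mono') (auto simp: g_def)
      also have "(\<epsilon> / g) powr 2 \<le> 1/100"
      proof -
        have "(\<epsilon> / g) powr 2 = (\<epsilon> / g)\<^sup>2" using epos by (simp add: g_def powr_realpow')
        also have "\<dots> \<le> (1/100)\<^sup>2" using epos eps_small by (intro power_mono) (auto simp: g_def)
        also have "(1/100::real)\<^sup>2 \<le> 1/100" by (simp add: power2_eq_square)
        finally show ?thesis .
      qed
      finally have le: "e2a / gp \<le> 1/100" .
      have "2 * D0 / real T \<le> c / (4 * real k) * (1/100)"
        unfolding eq using c1 kpos le by (intro mult_left_mono) auto
      also have "\<dots> \<le> 1/100" using ck kpos by (simp add: field_simps)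
      finally show ?thesis .
    qed
    have sQ: "(\<Sum>j = 1..k. measure (measure_pmf (traj \<pi> (nu n k \<epsilon> j) T)) (Gs j)) > c / 4"
    proof -
      have "c / 2 * (1 - 2 * D / real T) - 26 * \<epsilon>\<^sup>2 * D \<ge> c / 2 * (1 - 2 * D0 / real T) - 26 * \<epsilon>\<^sup>2 * D0"
      proof -
        have "2 * D / real T \<le> 2 * D0 / real T" using DD0 Tp by (simp add: divide_right_mono)
        then have "c / 2 * (1 - 2 * D0 / real T) \<le> c / 2 * (1 - 2 * D / real T)" using c1 by (intro mult_left_mono) auto
        moreover have "26 * \<epsilon>\<^sup>2 * D \<le> 26 * \<epsilon>\<^sup>2 * D0" using DD0 by (intro mult_left_mono) auto
        ultimately show ?thesis by linarith
      qed
      moreover have "c / 2 * (1 - 2 * D0 / real T) \<ge> c / 2 * (99/100)" using D0T c1 by (intro mult_left_mono) auto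
      ultimately have "c / 2 * (1 - 2 * D / real T) - 26 * \<epsilon>\<^sup>2 * D > c / 4" using D0b c1 by linarith
      then show ?thesis using sumQ unfolding cnat by linarith
    qed
    obtain j where j: "j \<in> {1..k}" and Qj: "measure (measure_pmf (traj \<pi> (nu n k \<epsilon> j) T)) (Gs j) > c / (4 * real k)"
    proof (rule ccontr)
      assume "\<not> thesis"
      then have "\<forall>j\<in>{1..k}. measure (measure_pmf (traj \<pi> (nu n k \<epsilon> j) T)) (Gs j) \<le> c / (4 * real k)"
        using that by force
      then have "(\<Sum>j = 1..k. measure (measure_pmf (traj \<pi> (nu n k \<epsilon> j) T)) (Gs j)) \<le> (\<Sum>j = 1..k. c / (4 * real k))"
        by (intro sum_mono) auto
      also have "\<dots> = c / 4" using kpos by simp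
      finally show False using sQ by simp
    qed
    let ?\<nu> = "nu n k \<epsilon> j"
    have mem: "?\<nu> \<in> hard_instances n k \<epsilon>" using j by (auto simp: hard_instances_def)
    have key: "C * real k * \<epsilon> powr (1 - 2 * \<alpha>) = \<epsilon> * real T / 2 * (c / (4 * real k))"
    proof -
      have "\<epsilon> powr (1 - 2 * \<alpha>) = \<epsilon> / e2a" using epos by (simp add: e2a_def powr_diff)
      then show ?thesis using epos s0 e2a0 kpos by (simp add: CK TT field_simps power2_eq_square)
    qed
    have "C * (\<Sum>i \<in> {i \<in> {1..n}. gap n ?\<nu> i > 0}. gap n ?\<nu> i powr (1 - 2 * \<alpha>)) \<le> C * (real k * \<epsilon> powr (1 - 2 * \<alpha>))"
      using sum_nu[OF a, of j] j C0 by (intro mult_left_mono) auto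
    also have "\<dots> = \<epsilon> * real T / 2 * (c / (4 * real k))" using key by simp
    also have "\<dots> < \<epsilon> * real T / 2 * measure (measure_pmf (traj \<pi> ?\<nu> T)) (Gs j)"
      using Qj epos Tp by (intro mult_strict_left_mono) auto
    also have "\<dots> \<le> expected_regret n \<pi> ?\<nu> T" using regret_bound j by auto
    finally show ?thesis using mem unfolding C_def c_def by blast
  qed
qed

end

theorem theorem4p1:
  fixes \<alpha> :: real and n m k :: nat and A :: "nat \<Rightarrow> policy"
  assumes "\<alpha> \<ge> 1" and "2 \<le> m" and "m \<le> k" and "k < n"
    and "\<And>T. valid_policy n m (A T)"
  shows "\<exists>T0. \<forall>T\<ge>T0. \<exists>\<nu> \<in> hard_instances n k (eps \<alpha> k T).
           expected_regret n (A T) \<nu> T >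
             2 / 16 powr (\<alpha> + 1)
             * ((real k - real m + 1) * real T powr (1 / (\<alpha> + 1))
                / real k powr (1 + 1 / (\<alpha> + 1)))
             * (\<Sum>i \<in> {i \<in> {1..n}. gap n \<nu> i > 0}. gap n \<nu> i powr (1 - 2 * \<alpha>))"
proof -
  define r :: real where "r = 4 / (100 * (real n + 1))"
  define R where "R = r powr (2 + 2 * \<alpha>)"
  have r0: "0 < r" by (simp add: r_def)
  have R0: "0 < R" using r0 by (simp add: R_def)
  define T0 where "T0 = nat \<lceil>real k / R\<rceil> + 1"
  show ?thesis
  proof (intro exI allI impI)
    fix T assume TT0: "T0 \<le> T"
    have Tpos: "0 < T" using TT0 by (simp add: T0_def)
    have "real k / R \<le> real T"
      using TT0 unfolding T0_def by linarith
    then have kTR: "real k / real T \<le> R" using R0 Tpos by (simp add: field_simps)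
    define \<epsilon> where "\<epsilon> = eps \<alpha> k T"
    have b0: "0 < 1 / (2 + 2 * \<alpha>)" using assms(1) by simp
    have "(real k / real T) powr (1 / (2 + 2 * \<alpha>)) \<le> R powr (1 / (2 + 2 * \<alpha>))"
      using kTR b0 by (intro powr_mono2) auto
    also have "\<dots> = r" using r0 assms(1) by (simp add: R_def powr_powr)
    finally have le: "(real k / real T) powr (1 / (2 + 2 * \<alpha>)) \<le> r" .
    have k0: "0 < k" using assms by simp
    have epos: "0 < \<epsilon>" using k0 Tpos by (simp add: \<epsilon>_def eps_def)
    have esmall: "(real n + 1) * \<epsilon> \<le> 1/100"
    proof -
      have "(real n + 1) * \<epsilon> \<le> (real n + 1) * (1/4 * r)"
        using le by (intro mult_left_mono) (auto simp: \<epsilon>_def eps_def)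
      also have "\<dots> = 1/100" by (simp add: r_def)
      finally show ?thesis .
    qed
    interpret H: hard n k \<epsilon> m "A T" T
      by unfold_locales (use assms Tpos epos esmall in auto)
    show "\<exists>\<nu> \<in> hard_instances n k (eps \<alpha> k T).
           expected_regret n (A T) \<nu> T >
             2 / 16 powr (\<alpha> + 1)
             * ((real k - real m + 1) * real T powr (1 / (\<alpha> + 1))
                / real k powr (1 + 1 / (\<alpha> + 1)))
             * (\<Sum>i \<in> {i \<in> {1..n}. gap n \<nu> i > 0}. gap n \<nu> i powr (1 - 2 * \<alpha>))"
      using H.final[OF assms(1) \<epsilon>_def] by (simp add: \<epsilon>_def)
  qed
qed

end
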